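(* Let $1\le r\le q\le\infty$, let $Y$ be a maximal symmetric sequence space and let $X={\rm ID}\mathcal L(Y,\ell_q)$ (with equal norms). Then for all Banach spaces $E,F$, all $T\in\mathcal L(E,F)$ and all $n\in\mathbb N$, \[\pi_{X,r}^n(T)=\sup\Big\{\pi_{q,r}^n(D_\sigma RT)\ :\ R\in\mathcal L(F,\ell_\infty),\ \|R\|\le1,\ \sigma\in Y,\ \|\sigma\|_Y\le1\Big\},\] where $D_\sigma:\ell_\infty\to\ell_\infty$ is the diagonal operator $(\tau_k)\mapsto(\sigma_k\tau_k)$.
   Context: All sequences are scalar sequences indexed by $\mathbb N$; $(e_k)$ denotes the unit vectors, and $P_n\sigma:=\sum_{k=1}^n\sigma_ke_k$. A maximal sequence space is a Banach space $(X,\|\cdot\|_X)$ of scalar sequences such that: (i) $\ell_1\subset X\subset\ell_\infty$ and $\|e_k\|_X=1$ for all $k$; (ii) if $\sigma\in X$ and $\alpha\in\ell_\infty$ then $\alpha\sigma\in X$ with $\|\alpha\sigma\|_X\le\|\alpha\|_\infty\|\sigma\|_X$; (iii) $\sigma\in X$ iff $\sup_n\|P_n\sigma\|_X<\infty$, and then $\|\sigma\|_X=\sup_n\|P_n\sigma\|_X$. It is symmetric if moreover $\sigma\in X$ iff the nonincreasing rearrangement $\sigma^*$ of $(|\sigma_k|)_k$ lies in $X$, with $\|\sigma^*\|_X=\|\sigma\|_X$. For finitely many scalars, $\|(\sigma_k)_1^n\|_X:=\|\sum_1^n\sigma_ke_k\|_X$. For maximal sequence spaces $X,Y$, ${\rm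 ID}\mathcal L(X,Y)$ is the space of sequences $\sigma$ for which the diagonal operator $D_\sigma$ maps $X$ boundedly into $Y$, normed by the operator norm. For Banach spaces $E,F$, $\mathcal L(E,F)$ denotes bounded linear operators. For $x_1,\dots,x_n\in E$ and $1\le q\le\infty$, $\omega_q(x_k)_1^n:=\sup_{a\in B_{E^*}}(\sum_{k=1}^n|\langle x_k,a\rangle|^q)^{1/q}$. For a maximal symmetric sequence space $X$ and $T\in\mathcal L(E,F)$: $\pi_{X,q}^n(T):=\sup\{\|\sum_{k=1}^n\|Tx_k\|_Fe_k\|_X:\ x_1,\dots,x_n\in E,\ \omega_q(x_k)_1^n\le1\}$, and $\pi_{p,q}^n:=\pi_{\ell_p,q}^n$. *)

theory Defs
  imports "HOL-Analysis.Analysis"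
begin

definition unitvec :: "nat \<Rightarrow> (nat \<Rightarrow> real)" where
  "unitvec k = (\<lambda>j. if j = k then 1 else 0)"

definition Psec :: "nat \<Rightarrow> (nat \<Rightarrow> real) \<Rightarrow> (nat \<Rightarrow> real)" where
  "Psec n \<sigma> = (\<lambda>k. if k < n then \<sigma> k else 0)"

definition l1_set :: "(nat \<Rightarrow> real) set" where
  "l1_set = {\<sigma>. summable (\<lambda>k. \<bar>\<sigma> k\<bar>)}"

definition linf_set :: "(nat \<Rightarrow> real) set" where
  "linf_set = {\<sigma>. bounded (range \<sigma>)}"

definition linf_norm :: "(nat \<Rightarrow> real) \<Rightarrow> real" where
  "linf_norm \<alpha> = (SUP k. \<bar>\<alpha> k\<bar>)"

(* nonincreasing rearrangement of (|sigma_k|)_k (for bounded sigma) *)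
definition rearr :: "(nat \<Rightarrow> real) \<Rightarrow> (nat \<Rightarrow> real)" where
  "rearr \<sigma> = (\<lambda>n. Inf {t. 0 \<le> t \<and> finite {k. t < \<bar>\<sigma> k\<bar>} \<and> card {k. t < \<bar>\<sigma> k\<bar>} \<le> n})"

definition maximal_seq_space :: "(nat \<Rightarrow> real) set \<Rightarrow> ((nat \<Rightarrow> real) \<Rightarrow> real) \<Rightarrow> bool" where
  "maximal_seq_space X N \<longleftrightarrow>
     \<comment> \<open>Banach space\<close>
     (\<lambda>k. 0) \<in> X \<and> (\<forall>\<sigma>\<in>X. \<forall>\<tau>\<in>X. (\<lambda>k. \<sigma> k + \<tau> k) \<in> X) \<and> (\<forall>c. \<forall>\<sigma>\<in>X. (\<lambda>k. c * \<sigma> k) \<in> X) \<and>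
     (\<forall>\<sigma>\<in>X. 0 \<le> N \<sigma> \<and> (N \<sigma> = 0 \<longleftrightarrow> (\<forall>k. \<sigma> k = 0))) \<and>
     (\<forall>c. \<forall>\<sigma>\<in>X. N (\<lambda>k. c * \<sigma> k) = \<bar>c\<bar> * N \<sigma>) \<and>
     (\<forall>\<sigma>\<in>X. \<forall>\<tau>\<in>X. N (\<lambda>k. \<sigma> k + \<tau> k) \<le> N \<sigma> + N \<tau>) \<and>
     (\<forall>s. (\<forall>m. s m \<in> X) \<and> (\<forall>e>0. \<exists>M. \<forall>m\<ge>M. \<forall>m'\<ge>M. N (\<lambda>k. s m k - s m' k) < e)
          \<longrightarrow> (\<exists>\<sigma>\<in>X. (\<lambda>m. N (\<lambda>k. s m k - \<sigma> k)) \<longlonglongrightarrow> 0)) \<and>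
     \<comment> \<open>(i)\<close>
     l1_set \<subseteq> X \<and> X \<subseteq> linf_set \<and> (\<forall>k. N (unitvec k) = 1) \<and>
     \<comment> \<open>(ii)\<close>
     (\<forall>\<sigma>\<in>X. \<forall>\<alpha>\<in>linf_set. (\<lambda>k. \<alpha> k * \<sigma> k) \<in> X \<and> N (\<lambda>k. \<alpha> k * \<sigma> k) \<le> linf_norm \<alpha> * N \<sigma>) \<and>
     \<comment> \<open>(iii)\<close>
     (\<forall>\<sigma>. \<sigma> \<in> X \<longleftrightarrow> bdd_above (range (\<lambda>n. N (Psec n \<sigma>)))) \<and>
     (\<forall>\<sigma>\<in>X. N \<sigma> = (SUP n. N (Psec n \<sigma>)))"

definition maximal_symmetric_seq_space :: "(nat \<Rightarrow> real) set \<Rightarrow> ((nat \<Rightarrow> real) \<Rightarrow> real) \<Rightarrow> bool" where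
  "maximal_symmetric_seq_space X N \<longleftrightarrow> maximal_seq_space X N \<and>
     (\<forall>\<sigma>\<in>linf_set. (\<sigma> \<in> X \<longleftrightarrow> rearr \<sigma> \<in> X) \<and> (\<sigma> \<in> X \<longrightarrow> N (rearr \<sigma>) = N \<sigma>))"

definition lq_set :: "ereal \<Rightarrow> (nat \<Rightarrow> real) set" where
  "lq_set q = (if q = \<infinity> then linf_set
               else {\<sigma>. summable (\<lambda>k. \<bar>\<sigma> k\<bar> powr real_of_ereal q)})"

definition lq_norm :: "ereal \<Rightarrow> (nat \<Rightarrow> real) \<Rightarrow> real" where
  "lq_norm q \<sigma> = (if q = \<infinity> then (SUP k. \<bar>\<sigma> k\<bar>)
               else (\<Sum>k. \<bar>\<sigma> k\<bar> powr real_of_ereal q) powr (1 / real_of_ereal q))"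

(* ID L(X,Y): diagonal multipliers mapping X boundedly into Y, with operator norm *)
definition IDL_set :: "(nat \<Rightarrow> real) set \<Rightarrow> ((nat \<Rightarrow> real) \<Rightarrow> real) \<Rightarrow>
    (nat \<Rightarrow> real) set \<Rightarrow> ((nat \<Rightarrow> real) \<Rightarrow> real) \<Rightarrow> (nat \<Rightarrow> real) set" where
  "IDL_set X NX Y NY = {\<sigma>. (\<forall>\<tau>\<in>X. (\<lambda>k. \<sigma> k * \<tau> k) \<in> Y) \<and>
                           (\<exists>C. \<forall>\<tau>\<in>X. NY (\<lambda>k. \<sigma> k * \<tau> k) \<le> C * NX \<tau>)}"

definition IDL_norm :: "(nat \<Rightarrow> real) set \<Rightarrow> ((nat \<Rightarrow> real) \<Rightarrow> real) \<Rightarrow>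
    ((nat \<Rightarrow> real) \<Rightarrow> real) \<Rightarrow> (nat \<Rightarrow> real) \<Rightarrow> real" where
  "IDL_norm X NX NY \<sigma> = Sup {NY (\<lambda>k. \<sigma> k * \<tau> k) | \<tau>. \<tau> \<in> X \<and> NX \<tau> \<le> 1}"

definition omega :: "ereal \<Rightarrow> nat \<Rightarrow> (nat \<Rightarrow> 'e::real_normed_vector) \<Rightarrow> real" where
  "omega q n x = Sup {lq_norm q (\<lambda>k. if k < n then a (x k) else 0) | a.
                        bounded_linear a \<and> onorm a \<le> 1}"

definition pi_X :: "((nat \<Rightarrow> real) \<Rightarrow> real) \<Rightarrow> ereal \<Rightarrow> nat \<Rightarrow>
    ('e::real_normed_vector \<Rightarrow> 'f::real_normed_vector) \<Rightarrow> real" where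
  "pi_X N q n T = Sup {N (\<lambda>k. if k < n then norm (T (x k)) else 0) | x. omega q n x \<le> 1}"

definition pi_pq :: "ereal \<Rightarrow> ereal \<Rightarrow> nat \<Rightarrow>
    ('e::real_normed_vector \<Rightarrow> 'f::real_normed_vector) \<Rightarrow> real" where
  "pi_pq p q n T = pi_X (lq_norm p) q n T"

(* diagonal operator on l_infinity = (nat \<Rightarrow>\<^sub>C real) *)
definition diag_op :: "(nat \<Rightarrow> real) \<Rightarrow> (nat \<Rightarrow>\<^sub>C real) \<Rightarrow> (nat \<Rightarrow>\<^sub>C real)" where
  "diag_op \<sigma> f = Bcontfun (\<lambda>k. \<sigma> k * apply_bcontfun f k)"

end

theory Submission
  imports Defs
begin


definition sublin :: "('a::real_vector \<Rightarrow> real) \<Rightarrow> bool" where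
  "sublin q \<longleftrightarrow> (\<forall>x y. q (x + y) \<le> q x + q y) \<and> (\<forall>c x. 0 \<le> c \<longrightarrow> q (c *\<^sub>R x) = c * q x)"

lemma sublin_0: "sublin q \<Longrightarrow> q 0 = 0"
  unfolding sublin_def by (metis mult_zero_left order_refl scaleR_zero_left)

lemma sublin_neg: "sublin q \<Longrightarrow> - q (- x) \<le> q x"
proof -
  assume s: "sublin q"
  have "q (x + - x) \<le> q x + q (- x)" using s unfolding sublin_def by blast
  thus ?thesis using sublin_0[OF s] by simp
qed

definition shiftinf :: "('a::real_vector \<Rightarrow> real) \<Rightarrow> 'a \<Rightarrow> 'a \<Rightarrow> real" where
  "shiftinf q y x = Inf ((\<lambda>t. q (x + t *\<^sub>R y) - t * q y) ` {0..})"

lemma shiftinf_bdd: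
  assumes s: "sublin q"
  shows "bdd_below ((\<lambda>t. q (x + t *\<^sub>R y) - t * q y) ` {0..})"
proof (rule bdd_belowI2[where m = "- q (- x)"])
  fix t :: real assume t: "t \<in> {0..}"
  have "q (t *\<^sub>R y) = q ((x + t *\<^sub>R y) + (- x))" by simp
  also have "\<dots> \<le> q (x + t *\<^sub>R y) + q (- x)" using s unfolding sublin_def by blast
  finally show "- q (- x) \<le> q (x + t *\<^sub>R y) - t * q y"
    using s t unfolding sublin_def by auto
qed

lemma shiftinf_le:
  assumes s: "sublin q" and t: "0 \<le> t"
  shows "shiftinf q y x \<le> q (x + t *\<^sub>R y) - t * q y"
  unfolding shiftinf_def using shiftinf_bdd[OF s] t by (auto intro: cINF_lower)

lemma shiftinf_ge:
  assumes "\<And>t. 0 \<le> t \<Longrightarrow> m \<le> q (x + t *\<^sub>R y) - t * q y"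
  shows "m \<le> shiftinf q y x"
  unfolding shiftinf_def using assms by (auto intro!: cINF_greatest)

lemma shiftinf_le_self: "sublin q \<Longrightarrow> shiftinf q y x \<le> q x"
  using shiftinf_le[of q 0 y x] by simp

lemma shiftinf_sublin:
  assumes s: "sublin q"
  shows "sublin (shiftinf q y)"
  unfolding sublin_def
proof (intro conjI allI impI)
  fix x1 x2
  have A: "shiftinf q y (x1 + x2) - (q (x2 + t2 *\<^sub>R y) - t2 * q y) \<le> q (x1 + t1 *\<^sub>R y) - t1 * q y"
    if "0 \<le> t1" "0 \<le> t2" for t1 t2
  proof -
    have "shiftinf q y (x1 + x2) \<le> q ((x1 + x2) + (t1 + t2) *\<^sub>R y) - (t1 + t2) * q y"
      using shiftinf_le[OF s, of "t1 + t2"] that by simp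
    also have "q ((x1 + x2) + (t1 + t2) *\<^sub>R y) = q ((x1 + t1 *\<^sub>R y) + (x2 + t2 *\<^sub>R y))"
      by (simp add: algebra_simps)
    also have "\<dots> \<le> q (x1 + t1 *\<^sub>R y) + q (x2 + t2 *\<^sub>R y)" using s unfolding sublin_def by blast
    finally show ?thesis by (simp add: algebra_simps)
  qed
  have "shiftinf q y (x1 + x2) - (q (x2 + t2 *\<^sub>R y) - t2 * q y) \<le> shiftinf q y x1" if "0 \<le> t2" for t2
    by (rule shiftinf_ge) (use A that in auto)
  hence "shiftinf q y (x1 + x2) - shiftinf q y x1 \<le> shiftinf q y x2"
    by (intro shiftinf_ge) (auto simp: algebra_simps)
  thus "shiftinf q y (x1 + x2) \<le> shiftinf q y x1 + shiftinf q y x2" by simp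
next
  fix c :: real and x :: 'a assume c: "0 \<le> c"
  show "shiftinf q y (c *\<^sub>R x) = c * shiftinf q y x"
  proof (cases "c = 0")
    case True
    have "shiftinf q y 0 = 0"
    proof (rule antisym)
      show "shiftinf q y 0 \<le> 0" using shiftinf_le[OF s, of 0 y 0] sublin_0[OF s] by simp
      show "0 \<le> shiftinf q y 0"
        by (rule shiftinf_ge) (use s in \<open>auto simp: sublin_def\<close>)
    qed
    thus ?thesis using True by simp
  next
    case False
    hence cp: "0 < c" using c by simp
    have hom: "q (c *\<^sub>R z) = c * q z" for z using s c unfolding sublin_def by blast
    have eq: "q (c *\<^sub>R x + t *\<^sub>R y) - t * q y = c * (q (x + (t / c) *\<^sub>R y) - (t / c) * q y)" for t
    proof -
      have e1: "c *\<^sub>R x + t *\<^sub>R y = c *\<^sub>R (x + (t / c) *\<^sub>R y)" using cp by (simp add: algebra_simps)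
      have "q (c *\<^sub>R x + t *\<^sub>R y) = c * q (x + (t / c) *\<^sub>R y)" unfolding e1 by (rule hom)
      thus ?thesis using cp by (simp add: algebra_simps)
    qed
    show ?thesis
    proof (rule antisym)
      have "shiftinf q y (c *\<^sub>R x) \<le> c * (q (x + t *\<^sub>R y) - t * q y)" if "0 \<le> t" for t
        using shiftinf_le[OF s, of "c * t" y "c *\<^sub>R x"] eq[of "c * t"] that cp by simp
      hence "shiftinf q y (c *\<^sub>R x) / c \<le> q (x + t *\<^sub>R y) - t * q y" if "0 \<le> t" for t
        using that cp by (simp add: divide_le_eq mult.commute)
      hence "shiftinf q y (c *\<^sub>R x) / c \<le> shiftinf q y x" by (intro shiftinf_ge)
      thus "shiftinf q y (c *\<^sub>R x) \<le> c * shiftinf q y x" using cp by (simp add: divide_le_eq mult.commute)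
    next
      have "c * shiftinf q y x \<le> q (c *\<^sub>R x + t *\<^sub>R y) - t * q y" if "0 \<le> t" for t
        using shiftinf_le[OF s, of "t / c" y x] eq[of t] that cp by (simp add: mult_left_mono)
      thus "c * shiftinf q y x \<le> shiftinf q y (c *\<^sub>R x)" by (intro shiftinf_ge)
    qed
  qed
qed

definition epi :: "('a \<Rightarrow> real) \<Rightarrow> ('a \<times> real) set" where
  "epi q = {(x, t). q x \<le> t}"

lemma epi_subset_iff: "epi q1 \<subseteq> epi q2 \<longleftrightarrow> (\<forall>x. q2 x \<le> q1 x)"
proof
  assume a: "epi q1 \<subseteq> epi q2"
  show "\<forall>x. q2 x \<le> q1 x"
  proof
    fix x have "(x, q1 x) \<in> epi q1" unfolding epi_def by simp
    thus "q2 x \<le> q1 x" using a unfolding epi_def by auto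
  qed
next
  assume "\<forall>x. q2 x \<le> q1 x"
  thus "epi q1 \<subseteq> epi q2" unfolding epi_def using order_trans by fastforce
qed

lemma epi_inj: "epi q1 = epi q2 \<Longrightarrow> q1 = q2"
  by (metis antisym epi_subset_iff equalityD1 equalityD2 ext)

lemma minimal_sublin_exists:
  fixes p :: "'a::real_vector \<Rightarrow> real"
  assumes p: "sublin p"
  shows "\<exists>g. sublin g \<and> (\<forall>x. g x \<le> p x) \<and>
     (\<forall>h. sublin h \<and> (\<forall>x. h x \<le> g x) \<longrightarrow> h = g)"
proof -
  define S where "S = {g. sublin g \<and> (\<forall>x. g x \<le> p x)}"
  define A where "A = epi ` S"
  have "\<forall>C\<in>chains A. \<exists>U\<in>A. \<forall>X\<in>C. X \<subseteq> U"
  proof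
    fix C assume C: "C \<in> chains A"
    show "\<exists>U\<in>A. \<forall>X\<in>C. X \<subseteq> U"
    proof (cases "C = {}")
      case True
      have "epi p \<in> A" unfolding A_def S_def using p by auto
      thus ?thesis using True by blast
    next
      case False
      define Q where "Q = {g \<in> S. epi g \<in> C}"
      have CQ: "C = epi ` Q" using C unfolding Q_def A_def chains_def by auto
      have Qne: "Q \<noteq> {}" using False CQ by auto
      have QS: "\<And>g. g \<in> Q \<Longrightarrow> sublin g \<and> (\<forall>x. g x \<le> p x)" unfolding Q_def S_def by auto
      have chain: "\<And>g1 g2. g1 \<in> Q \<Longrightarrow> g2 \<in> Q \<Longrightarrow> (\<forall>x. g1 x \<le> g2 x) \<or> (\<forall>x. g2 x \<le> g1 x)"
      proof -
        fix g1 g2 assume "g1 \<in> Q" "g2 \<in> Q"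
        hence "epi g1 \<in> C" "epi g2 \<in> C" unfolding Q_def by auto
        hence "epi g1 \<subseteq> epi g2 \<or> epi g2 \<subseteq> epi g1" using C unfolding chains_def chain_subset_def by blast
        thus "(\<forall>x. g1 x \<le> g2 x) \<or> (\<forall>x. g2 x \<le> g1 x)" unfolding epi_subset_iff by blast
      qed
      define h where "h x = Inf ((\<lambda>g. g x) ` Q)" for x
      have bdd: "bdd_below ((\<lambda>g. g x) ` Q)" for x
      proof (rule bdd_belowI2[where m = "- p (- x)"])
        fix g assume "g \<in> Q"
        hence "sublin g" "g (- x) \<le> p (- x)" using QS by auto
        thus "- p (- x) \<le> g x" using sublin_neg[of g x] by linarith
      qed
      have hle: "h x \<le> g x" if "g \<in> Q" for g x unfolding h_def using bdd that by (auto intro: cINF_lower)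
      have hge: "m \<le> h x" if "\<And>g. g \<in> Q \<Longrightarrow> m \<le> g x" for m x
        unfolding h_def using Qne that by (auto intro!: cINF_greatest)
      have "sublin h"
        unfolding sublin_def
      proof (intro conjI allI impI)
        fix x y
        have "h (x + y) - g2 y \<le> g1 x" if "g1 \<in> Q" "g2 \<in> Q" for g1 g2
        proof -
          from chain[OF that] show ?thesis
          proof
            assume le: "\<forall>x. g1 x \<le> g2 x"
            have "h (x + y) \<le> g1 (x + y)" using hle that by auto
            also have "\<dots> \<le> g1 x + g1 y" using QS[OF that(1)] unfolding sublin_def by blast
            finally show ?thesis using le[rule_format, of y] by linarith
          next
            assume le: "\<forall>x. g2 x \<le> g1 x"
            have "h (x + y) \<le> g2 (x + y)" using hle that by auto
            also have "\<dots> \<le> g2 x + g2 y" using QS[OF that(2)] unfolding sublin_def by blast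
            finally show ?thesis using le[rule_format, of x] by linarith
          qed
        qed
        hence H: "h (x + y) - g2 y \<le> h x" if "g2 \<in> Q" for g2 using that by (intro hge) auto
        have "h (x + y) - h x \<le> g2 y" if "g2 \<in> Q" for g2 using H[OF that] by linarith
        hence "h (x + y) - h x \<le> h y" by (intro hge)
        thus "h (x + y) \<le> h x + h y" by simp
      next
        fix c :: real and x assume c: "0 \<le> c"
        show "h (c *\<^sub>R x) = c * h x"
        proof (cases "c = 0")
          case True
          have "h 0 = 0"
          proof (rule antisym)
            obtain g where gQ: "g \<in> Q" using Qne by blast
            show "h 0 \<le> 0" using hle[OF gQ, of 0] sublin_0[of g] QS[OF gQ] by simp
            show "0 \<le> h 0" by (rule hge) (use sublin_0 QS in force)
          qed
          thus ?thesis using True by simp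
        next
          case False
          hence cp: "0 < c" using c by simp
          have hom: "g (c *\<^sub>R z) = c * g z" if "g \<in> Q" for g z using QS[OF that] c unfolding sublin_def by blast
          show ?thesis
          proof (rule antisym)
            have "h (c *\<^sub>R x) / c \<le> g x" if "g \<in> Q" for g
              using hle[OF that, of "c *\<^sub>R x"] hom[OF that] cp by (simp add: divide_le_eq mult.commute)
            hence "h (c *\<^sub>R x) / c \<le> h x" by (intro hge)
            thus "h (c *\<^sub>R x) \<le> c * h x" using cp by (simp add: divide_le_eq mult.commute)
          next
            have "c * h x \<le> g (c *\<^sub>R x)" if "g \<in> Q" for g
              using hle[OF that, of x] hom[OF that] cp by (simp add: mult_left_mono)
            thus "c * h x \<le> h (c *\<^sub>R x)" by (intro hge)
          qed
        qed
      qed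
      moreover have "\<forall>x. h x \<le> p x" using Qne hle QS by (meson all_not_in_conv order_trans)
      ultimately have "epi h \<in> A" unfolding A_def S_def by auto
      moreover have "\<forall>X\<in>C. X \<subseteq> epi h"
      proof
        fix X assume "X \<in> C"
        then obtain g where "g \<in> Q" "X = epi g" using CQ by blast
        thus "X \<subseteq> epi h" using hle epi_subset_iff by metis
      qed
      ultimately show ?thesis by blast
    qed
  qed
  from Zorn_Lemma2[OF this] obtain M where M: "M \<in> A" "\<forall>X\<in>A. M \<subseteq> X \<longrightarrow> X = M" by blast
  then obtain g where g: "g \<in> S" "M = epi g" unfolding A_def by auto
  show ?thesis
  proof (intro exI conjI allI impI)
    show "sublin g" "\<And>x. g x \<le> p x" using g unfolding S_def by auto
    fix h assume h: "sublin h \<and> (\<forall>x. h x \<le> g x)"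
    hence "h \<in> S" using g unfolding S_def by (auto intro: order_trans)
    moreover have "epi g \<subseteq> epi h" using h epi_subset_iff by blast
    ultimately have "epi h = epi g" using M g unfolding A_def by blast
    thus "h = g" by (rule epi_inj)
  qed
qed

lemma minimal_sublin_linear:
  fixes g :: "'a::real_vector \<Rightarrow> real"
  assumes s: "sublin g" and minl: "\<forall>h. sublin h \<and> (\<forall>x. h x \<le> g x) \<longrightarrow> h = g"
  shows "linear g"
proof -
  have add: "g (x + y) = g x + g y" for x y
  proof -
    have "shiftinf g y = g" using minl shiftinf_sublin[OF s] shiftinf_le_self[OF s] by blast
    hence "g x \<le> g (x + 1 *\<^sub>R y) - 1 * g y" using shiftinf_le[OF s, of 1 y x] by (metis zero_le_one)
    moreover have "g (x + y) \<le> g x + g y" using s unfolding sublin_def by blast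
    ultimately show ?thesis by simp
  qed
  have neg: "g (- x) = - g x" for x using add[of x "- x"] sublin_0[OF s] by simp
  have sc: "g (c *\<^sub>R x) = c * g x" for c x
  proof (cases "0 \<le> c")
    case True thus ?thesis using s unfolding sublin_def by blast
  next
    case False
    have hom: "\<And>d z. 0 \<le> d \<Longrightarrow> g (d *\<^sub>R z) = d * g z" using s unfolding sublin_def by blast
    have e: "g ((- c) *\<^sub>R x) = (- c) * g x" by (rule hom) (use False in simp)
    have "g (c *\<^sub>R x) = - g ((- c) *\<^sub>R x)" using neg[of "(- c) *\<^sub>R x"] by simp
    thus ?thesis using e by simp
  qed
  show ?thesis by (rule linearI) (use add sc in auto)
qed

lemma norming_functional:
  fixes x0 :: "'a::real_normed_vector"
  shows "\<exists>f. bounded_linear f \<and> onorm f \<le> 1 \<and> f x0 = norm x0"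
proof -
  have sn: "sublin (norm :: 'a \<Rightarrow> real)" unfolding sublin_def by (auto intro: norm_triangle_ineq)
  define p where "p = shiftinf norm x0"
  have sp: "sublin p" unfolding p_def by (rule shiftinf_sublin[OF sn])
  from minimal_sublin_exists[OF sp] obtain g where
    g: "sublin g" "\<forall>x. g x \<le> p x" "\<forall>h. sublin h \<and> (\<forall>x. h x \<le> g x) \<longrightarrow> h = g" by blast
  have lin: "linear g" using minimal_sublin_linear g by blast
  have gn: "g x \<le> norm x" for x using g(2) shiftinf_le_self[OF sn, of x0 x] unfolding p_def by (metis order_trans)
  have gabs: "\<bar>g x\<bar> \<le> norm x" for x
    using gn[of x] gn[of "- x"] linear_neg[OF lin, of x] by auto
  have bl: "bounded_linear g"
    by (rule bounded_linear_intro[where K=1]) (use lin gabs in \<open>auto simp: linear_add linear_scale\<close>)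
  have "g (- x0) \<le> p (- x0)" using g(2) by blast
  also have "p (- x0) \<le> norm (- x0 + 1 *\<^sub>R x0) - 1 * norm x0" unfolding p_def by (rule shiftinf_le[OF sn]) simp
  finally have "- g x0 \<le> - norm x0" using linear_neg[OF lin, of x0] by simp
  hence "g x0 = norm x0" using gn[of x0] by simp
  moreover have "onorm g \<le> 1" using gabs by (intro onorm_bound) auto
  ultimately show ?thesis using bl by blast
qed




definition LqR :: "real \<Rightarrow> 'i set \<Rightarrow> ('i \<Rightarrow> real) \<Rightarrow> real" where
  "LqR p A f = (\<Sum>k\<in>A. \<bar>f k\<bar> powr p) powr (1 / p)"

definition LqM :: "'i set \<Rightarrow> ('i \<Rightarrow> real) \<Rightarrow> real" where
  "LqM A f = Max (insert 0 ((\<lambda>k. \<bar>f k\<bar>) ` A))"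

lemma LqR_nonneg: "0 \<le> LqR p A f"
  unfolding LqR_def by simp

lemma LqR_pow: "p > 0 \<Longrightarrow> LqR p A f powr p = (\<Sum>k\<in>A. \<bar>f k\<bar> powr p)"
  unfolding LqR_def powr_powr by (simp add: sum_nonneg)

lemma LqR_from_pow:
  assumes "p > 0" "0 \<le> s" "s powr p = (\<Sum>k\<in>A. \<bar>f k\<bar> powr p)"
  shows "LqR p A f = s"
  unfolding LqR_def using assms by (simp add: powr_powr flip: assms(3))

lemma LqR_mono:
  assumes "p > 0" "\<And>k. k \<in> A \<Longrightarrow> \<bar>f k\<bar> \<le> \<bar>g k\<bar>"
  shows "LqR p A f \<le> LqR p A g"
  unfolding LqR_def
  by (intro powr_mono2 sum_mono) (use assms in \<open>auto intro: sum_nonneg\<close>)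

lemma LqR_coord:
  assumes "p > 0" "finite A" "k \<in> A"
  shows "\<bar>f k\<bar> \<le> LqR p A f"
proof -
  have "\<bar>f k\<bar> powr p \<le> (\<Sum>k\<in>A. \<bar>f k\<bar> powr p)"
    by (rule member_le_sum) (use assms in auto)
  hence "(\<bar>f k\<bar> powr p) powr (1/p) \<le> (\<Sum>k\<in>A. \<bar>f k\<bar> powr p) powr (1/p)"
    by (intro powr_mono2) (use assms in auto)
  thus ?thesis unfolding LqR_def powr_powr using assms by simp
qed

lemma LqR_hom:
  assumes "p > 0"
  shows "LqR p A (\<lambda>k. c * f k) = \<bar>c\<bar> * LqR p A f"
proof (rule LqR_from_pow)
  show "0 \<le> \<bar>c\<bar> * LqR p A f" by (simp add: LqR_nonneg)
  have "(\<bar>c\<bar> * LqR p A f) powr p = \<bar>c\<bar> powr p * (\<Sum>k\<in>A. \<bar>f k\<bar> powr p)"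
    using assms by (simp add: powr_mult LqR_pow)
  also have "\<dots> = (\<Sum>k\<in>A. \<bar>c * f k\<bar> powr p)" by (simp add: sum_distrib_left abs_mult powr_mult)
  finally show "(\<bar>c\<bar> * LqR p A f) powr p = (\<Sum>k\<in>A. \<bar>c * f k\<bar> powr p)" .
qed (use assms in auto)

lemma LqR_cong_abs:
  assumes "p > 0" "\<And>k. k \<in> A \<Longrightarrow> \<bar>f k\<bar> = \<bar>g k\<bar>"
  shows "LqR p A f = LqR p A g"
  using LqR_mono[of p A f g] LqR_mono[of p A g f] assms by force

lemma LqR_group:
  assumes "p > 0" "finite A" "finite B" "g ` A \<subseteq> B"
  shows "LqR p B (\<lambda>y. LqR p {x\<in>A. g x = y} f) = LqR p A f"
proof (rule LqR_from_pow)
  have "(\<Sum>y\<in>B. \<bar>LqR p {x\<in>A. g x = y} f\<bar> powr p) = (\<Sum>y\<in>B. \<Sum>x\<in>{x\<in>A. g x = y}. \<bar>f x\<bar> powr p)"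
    using assms(1) by (simp add: LqR_pow LqR_nonneg)
  also have "\<dots> = (\<Sum>x\<in>A. \<bar>f x\<bar> powr p)" by (rule sum.group) (use assms in auto)
  finally show "LqR p A f powr p = (\<Sum>y\<in>B. \<bar>LqR p {x\<in>A. g x = y} f\<bar> powr p)"
    using assms(1) by (simp add: LqR_pow)
qed (use assms LqR_nonneg in auto)

lemma LqR_sum_le1:
  assumes "p > 0" "LqR p A f \<le> 1"
  shows "(\<Sum>k\<in>A. \<bar>f k\<bar> powr p) \<le> 1"
proof -
  have "LqR p A f powr p \<le> 1" using assms by (intro powr_le1) (auto simp: LqR_nonneg)
  thus ?thesis using assms(1) by (simp add: LqR_pow)
qed

lemma LqR_le1_from_sum:
  assumes "p > 0" "(\<Sum>k\<in>A. \<bar>f k\<bar> powr p) \<le> 1"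
  shows "LqR p A f \<le> 1"
  unfolding LqR_def using assms by (intro powr_le1) (auto simp: sum_nonneg)

lemma LqR_zero:
  assumes "p > 0" "finite A" "LqR p A f = 0" "k \<in> A"
  shows "f k = 0"
  using LqR_coord[OF assms(1,2,4), of f] assms(3) by simp

lemma LqR_anti:
  assumes r: "1 \<le> r" "r \<le> p" and A: "finite A"
  shows "LqR p A f \<le> LqR r A f"
proof (cases "LqR r A f = 0")
  case True
  hence "\<And>k. k \<in> A \<Longrightarrow> f k = 0" using LqR_zero[of r A f] r A by auto
  hence "LqR p A f = 0" unfolding LqR_def by simp
  thus ?thesis using True by simp
next
  case False
  define s where "s = LqR r A f"
  have sp: "s > 0" using False LqR_nonneg[of r A f] unfolding s_def by linarith
  define g where "g k = (1 / s) * f k" for k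
  have g1: "LqR r A g = 1" unfolding g_def using LqR_hom[of r A "1/s" f] sp r unfolding s_def by simp
  have gk: "\<bar>g k\<bar> \<le> 1" if "k \<in> A" for k using LqR_coord[of r A k g] g1 r A that by simp
  have "(\<Sum>k\<in>A. \<bar>g k\<bar> powr p) \<le> (\<Sum>k\<in>A. \<bar>g k\<bar> powr r)"
    by (intro sum_mono powr_mono') (use gk r in auto)
  also have "\<dots> \<le> 1" using LqR_sum_le1[of r A g] g1 r by simp
  finally have "LqR p A g \<le> 1" using r by (intro LqR_le1_from_sum) auto
  moreover have "LqR p A g = (1 / s) * LqR p A f" unfolding g_def using LqR_hom[of p A "1/s" f] sp r by simp
  ultimately show ?thesis using sp unfolding s_def by (simp add: field_simps)
qed

lemma LqR_holder:
  assumes p: "1 \<le> p" and A: "finite A"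
  shows "\<exists>\<beta>. (\<Sum>k\<in>A. \<beta> k * d k) = LqR p A d \<and>
              (\<forall>b. \<bar>\<Sum>k\<in>A. \<beta> k * b k\<bar> \<le> LqR p A b)"
proof (cases "LqR p A d = 0")
  case True
  thus ?thesis by (intro exI[of _ "\<lambda>_. 0"]) (simp add: LqR_nonneg)
next
  case False
  define S where "S = LqR p A d"
  have Sp: "S > 0" using False LqR_nonneg[of p A d] unfolding S_def by linarith
  define u where "u k = (\<bar>d k\<bar> / S) powr (p - 1)" for k
  define \<beta> where "\<beta> k = sgn (d k) * u k" for k
  have Spow: "S powr p = (\<Sum>k\<in>A. \<bar>d k\<bar> powr p)" unfolding S_def using p by (simp add: LqR_pow)
  have "(\<Sum>k\<in>A. \<beta> k * d k) = (\<Sum>k\<in>A. \<bar>d k\<bar> powr p / S powr (p - 1))"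
  proof (rule sum.cong)
    fix k assume "k \<in> A"
    have "\<beta> k * d k = \<bar>d k\<bar> * u k" unfolding \<beta>_def by (simp add: abs_sgn mult.commute mult.left_commute sgn_mult_abs)
    also have "\<dots> = \<bar>d k\<bar> powr p / S powr (p - 1)"
    proof (cases "d k = 0")
      case True thus ?thesis by simp
    next
      case False
      have "\<bar>d k\<bar> * \<bar>d k\<bar> powr (p - 1) = \<bar>d k\<bar> powr p"
        using powr_mult_base[of "\<bar>d k\<bar>" "p - 1"] by simp
      thus ?thesis unfolding u_def powr_divide by simp
    qed
    finally show "\<beta> k * d k = \<bar>d k\<bar> powr p / S powr (p - 1)" .
  qed simp
  also have "\<dots> = S powr p / S powr (p - 1)" by (simp add: Spow sum_divide_distrib)
  also have "\<dots> = S" using Sp by (simp add: powr_diff)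
  finally have E1: "(\<Sum>k\<in>A. \<beta> k * d k) = LqR p A d" unfolding S_def .
  have E2: "\<bar>\<Sum>k\<in>A. \<beta> k * b k\<bar> \<le> LqR p A b" for b
  proof -
    have "\<bar>\<Sum>k\<in>A. \<beta> k * b k\<bar> \<le> (\<Sum>k\<in>A. u k * \<bar>b k\<bar>)"
    proof -
      have "\<bar>\<Sum>k\<in>A. \<beta> k * b k\<bar> \<le> (\<Sum>k\<in>A. \<bar>\<beta> k * b k\<bar>)" by (rule sum_abs)
      also have "\<dots> \<le> (\<Sum>k\<in>A. u k * \<bar>b k\<bar>)"
        by (intro sum_mono) (auto simp: \<beta>_def abs_mult u_def abs_sgn_eq)
      finally show ?thesis .
    qed
    also have "\<dots> \<le> LqR p A b"
    proof (cases "p = 1")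
      case True
      have "(\<Sum>k\<in>A. u k * \<bar>b k\<bar>) \<le> (\<Sum>k\<in>A. \<bar>b k\<bar>)"
        by (intro sum_mono) (auto simp: u_def True intro: mult_left_le_one_le)
      also have "\<dots> = LqR p A b" unfolding LqR_def True by (simp add: sum_nonneg)
      finally show ?thesis .
    next
      case False
      hence p1: "p > 1" using p by simp
      show ?thesis
      proof (cases "LqR p A b = 0")
        case True
        hence "b k = 0" if "k \<in> A" for k using LqR_zero[of p A b k] p A that by simp
        thus ?thesis using True by simp
      next
        case False
        define B where "B = LqR p A b"
        have Bp: "B > 0" using False LqR_nonneg[of p A b] unfolding B_def by linarith
        have Bpow: "B powr p = (\<Sum>k\<in>A. \<bar>b k\<bar> powr p)" unfolding B_def using p by (simp add: LqR_pow)
        define p' where "p' = p / (p - 1)"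
        have p'1: "p' > 1" unfolding p'_def using p1 by (simp add: field_simps)
        have conj: "1 / p' + 1 / p = 1" unfolding p'_def using p1 by (simp add: field_simps)
        have Y: "u k * (\<bar>b k\<bar> / B) \<le> u k powr p' / p' + (\<bar>b k\<bar> / B) powr p / p" for k
          by (rule Youngs_inequality) (use p'1 p1 conj Bp in \<open>auto simp: u_def\<close>)
        have up: "u k powr p' = \<bar>d k\<bar> powr p / S powr p" for k
        proof -
          have "(p - 1) * p' = p" unfolding p'_def using p1 by simp
          thus ?thesis unfolding u_def powr_powr by (simp add: powr_divide)
        qed
        have "(\<Sum>k\<in>A. u k * (\<bar>b k\<bar> / B)) \<le> (\<Sum>k\<in>A. u k powr p' / p' + (\<bar>b k\<bar> / B) powr p / p)"
          by (intro sum_mono Y)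
        also have "\<dots> = (1 / p') * ((\<Sum>k\<in>A. \<bar>d k\<bar> powr p) / S powr p) + (1 / p) * ((\<Sum>k\<in>A. \<bar>b k\<bar> powr p) / B powr p)"
          by (simp add: sum.distrib up powr_divide sum_divide_distrib sum_distrib_left mult.commute)
        also have "\<dots> = 1" using Sp Bp conj by (simp flip: Spow Bpow)
        finally have "(\<Sum>k\<in>A. u k * (\<bar>b k\<bar> / B)) \<le> 1" .
        hence "(\<Sum>k\<in>A. u k * \<bar>b k\<bar>) / B \<le> 1" by (simp add: sum_divide_distrib)
        thus ?thesis using Bp unfolding B_def by simp
      qed
    qed
    finally show ?thesis .
  qed
  show ?thesis using E1 E2 by blast
qed

lemma LqM_le_iff:
  assumes "finite A"
  shows "LqM A f \<le> M \<longleftrightarrow> 0 \<le> M \<and> (\<forall>k\<in>A. \<bar>f k\<bar> \<le> M)"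
  unfolding LqM_def using assms by (simp add: Max_le_iff)

lemma LqM_nonneg: "finite A \<Longrightarrow> 0 \<le> LqM A f"
  unfolding LqM_def by (simp add: Max_ge_iff)

lemma LqM_coord: "finite A \<Longrightarrow> k \<in> A \<Longrightarrow> \<bar>f k\<bar> \<le> LqM A f"
  unfolding LqM_def by (simp add: Max_ge_iff)

lemma LqM_attained:
  assumes "finite A"
  shows "LqM A f = 0 \<or> (\<exists>k\<in>A. LqM A f = \<bar>f k\<bar>)"
proof -
  have "LqM A f \<in> insert 0 ((\<lambda>k. \<bar>f k\<bar>) ` A)" unfolding LqM_def
    by (rule Max_in) (use assms in auto)
  thus ?thesis by auto
qed




definition LqS :: "ereal \<Rightarrow> 'i set \<Rightarrow> ('i \<Rightarrow> real) \<Rightarrow> real" where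
  "LqS q A f = (if q = \<infinity> then LqM A f else LqR (real_of_ereal q) A f)"

lemma ereal_ge1_cases:
  assumes "1 \<le> (q::ereal)"
  obtains "q = \<infinity>" | p where "q = ereal p" "1 \<le> p"
  using assms by (cases q) auto

lemma LqM_mono: "finite A \<Longrightarrow> (\<And>k. k \<in> A \<Longrightarrow> \<bar>f k\<bar> \<le> \<bar>g k\<bar>) \<Longrightarrow> LqM A f \<le> LqM A g"
  by (subst LqM_le_iff) (auto intro: order_trans LqM_coord LqM_nonneg)

lemma LqM_hom:
  assumes "finite A"
  shows "LqM A (\<lambda>k. c * f k) = \<bar>c\<bar> * LqM A f"
proof (rule antisym)
  show "LqM A (\<lambda>k. c * f k) \<le> \<bar>c\<bar> * LqM A f"
    using assms by (subst LqM_le_iff) (auto simp: abs_mult LqM_nonneg intro: mult_left_mono LqM_coord)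
  show "\<bar>c\<bar> * LqM A f \<le> LqM A (\<lambda>k. c * f k)"
  proof (cases "c = 0")
    case True thus ?thesis using assms by (simp add: LqM_nonneg)
  next
    case False
    have "LqM A f \<le> LqM A (\<lambda>k. c * f k) / \<bar>c\<bar>"
    proof (subst LqM_le_iff[OF assms], intro conjI ballI)
      show "0 \<le> LqM A (\<lambda>k. c * f k) / \<bar>c\<bar>" using assms by (simp add: LqM_nonneg)
      fix k assume "k \<in> A"
      hence "\<bar>c * f k\<bar> \<le> LqM A (\<lambda>k. c * f k)" using LqM_coord[OF assms, of k "\<lambda>k. c * f k"] by simp
      thus "\<bar>f k\<bar> \<le> LqM A (\<lambda>k. c * f k) / \<bar>c\<bar>" using False by (simp add: abs_mult field_simps)
    qed
    thus ?thesis using False by (simp add: field_simps)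
  qed
qed

lemma LqM_group:
  assumes "finite A" "finite B" "g ` A \<subseteq> B"
  shows "LqM B (\<lambda>y. LqM {x\<in>A. g x = y} f) = LqM A f"
proof (rule antisym)
  show "LqM B (\<lambda>y. LqM {x\<in>A. g x = y} f) \<le> LqM A f"
    using assms by (subst LqM_le_iff) (auto simp: LqM_nonneg LqM_le_iff intro: LqM_coord)
  show "LqM A f \<le> LqM B (\<lambda>y. LqM {x\<in>A. g x = y} f)"
  proof (subst LqM_le_iff[OF assms(1)], intro conjI ballI)
    show "0 \<le> LqM B (\<lambda>y. LqM {x\<in>A. g x = y} f)" using assms by (simp add: LqM_nonneg)
    fix k assume k: "k \<in> A"
    have "\<bar>f k\<bar> \<le> LqM {x\<in>A. g x = g k} f" using assms k by (intro LqM_coord) auto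
    also have "\<dots> \<le> \<bar>LqM {x\<in>A. g x = g k} f\<bar>" by simp
    also have "\<dots> \<le> LqM B (\<lambda>y. LqM {x\<in>A. g x = y} f)"
      using assms k LqM_coord[of B "g k" "\<lambda>y. LqM {x\<in>A. g x = y} f"] by auto
    finally show "\<bar>f k\<bar> \<le> LqM B (\<lambda>y. LqM {x\<in>A. g x = y} f)" .
  qed
qed

lemma LqM_holder:
  assumes A: "finite A"
  shows "\<exists>\<beta>. (\<Sum>k\<in>A. \<beta> k * d k) = LqM A d \<and> (\<forall>b. \<bar>\<Sum>k\<in>A. \<beta> k * b k\<bar> \<le> LqM A b)"
proof -
  from LqM_attained[OF A, of d] show ?thesis
  proof
    assume "LqM A d = 0"
    thus ?thesis using A by (intro exI[of _ "\<lambda>_. 0"]) (simp add: LqM_nonneg)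
  next
    assume "\<exists>k\<in>A. LqM A d = \<bar>d k\<bar>"
    then obtain k0 where k0: "k0 \<in> A" "LqM A d = \<bar>d k0\<bar>" by blast
    define \<beta> where "\<beta> k = (if k = k0 then sgn (d k0) else 0)" for k
    have s: "(\<Sum>k\<in>A. \<beta> k * b k) = sgn (d k0) * b k0" for b
    proof -
      have "(\<Sum>k\<in>A. \<beta> k * b k) = (\<Sum>k\<in>A. if k = k0 then sgn (d k0) * b k else 0)"
        by (rule sum.cong) (auto simp: \<beta>_def)
      thus ?thesis using A k0 by (simp add: sum.delta)
    qed
    show ?thesis
    proof (intro exI[of _ \<beta>] conjI allI)
      show "(\<Sum>k\<in>A. \<beta> k * d k) = LqM A d" using s[of d] k0 abs_sgn[of "d k0"] by (metis mult.commute)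
      fix b
      have "\<bar>sgn (d k0) * b k0\<bar> \<le> \<bar>b k0\<bar>" by (simp add: abs_mult abs_sgn_eq)
      also have "\<dots> \<le> LqM A b" using LqM_coord[OF A k0(1)] .
      finally show "\<bar>\<Sum>k\<in>A. \<beta> k * b k\<bar> \<le> LqM A b" using s by simp
    qed
  qed
qed

lemma LqM_anti: "finite A \<Longrightarrow> 1 \<le> r \<Longrightarrow> LqM A f \<le> LqR r A f"
  by (subst LqM_le_iff) (auto simp: LqR_nonneg intro: LqR_coord)

lemma LqS_nonneg: "finite A \<Longrightarrow> 0 \<le> LqS q A f"
  unfolding LqS_def by (auto simp: LqM_nonneg LqR_nonneg)

lemma LqS_mono: "1 \<le> q \<Longrightarrow> finite A \<Longrightarrow> (\<And>k. k \<in> A \<Longrightarrow> \<bar>f k\<bar> \<le> \<bar>g k\<bar>) \<Longrightarrow> LqS q A f \<le> LqS q A g"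
  unfolding LqS_def by (erule ereal_ge1_cases) (auto intro: LqM_mono LqR_mono)

lemma LqS_coord: "1 \<le> q \<Longrightarrow> finite A \<Longrightarrow> k \<in> A \<Longrightarrow> \<bar>f k\<bar> \<le> LqS q A f"
  unfolding LqS_def by (erule ereal_ge1_cases) (auto intro: LqM_coord LqR_coord)

lemma LqS_hom: "1 \<le> q \<Longrightarrow> finite A \<Longrightarrow> LqS q A (\<lambda>k. c * f k) = \<bar>c\<bar> * LqS q A f"
  unfolding LqS_def by (erule ereal_ge1_cases) (auto simp: LqM_hom LqR_hom)

lemma LqS_group:
  "1 \<le> q \<Longrightarrow> finite A \<Longrightarrow> finite B \<Longrightarrow> g ` A \<subseteq> B \<Longrightarrow>
    LqS q B (\<lambda>y. LqS q {x\<in>A. g x = y} f) = LqS q A f"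
  unfolding LqS_def by (erule ereal_ge1_cases) (auto simp: LqM_group LqR_group)

lemma LqS_anti: "1 \<le> r \<Longrightarrow> r \<le> q \<Longrightarrow> finite A \<Longrightarrow> LqS q A f \<le> LqS r A f"
proof -
  assume r: "1 \<le> r" and rq: "r \<le> q" and A: "finite A"
  show ?thesis
  proof (cases "q = \<infinity>")
    case True
    show ?thesis
    proof (cases "r = \<infinity>")
      case True thus ?thesis using \<open>q = \<infinity>\<close> by simp
    next
      case False
      then obtain p where "r = ereal p" "1 \<le> p" using r by (cases r) auto
      thus ?thesis using \<open>q = \<infinity>\<close> A unfolding LqS_def by (simp add: LqM_anti)
    qed
  next
    case False
    then obtain p where p: "q = ereal p" using rq r by (cases q) auto
    then obtain p' where p': "r = ereal p'" "1 \<le> p'" "p' \<le> p" using r rq by (cases r) auto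
    thus ?thesis using p A unfolding LqS_def by (simp add: LqR_anti)
  qed
qed

lemma LqS_holder:
  "1 \<le> q \<Longrightarrow> finite A \<Longrightarrow>
   \<exists>\<beta>. (\<Sum>k\<in>A. \<beta> k * d k) = LqS q A d \<and> (\<forall>b. \<bar>\<Sum>k\<in>A. \<beta> k * b k\<bar> \<le> LqS q A b)"
  unfolding LqS_def by (erule ereal_ge1_cases) (auto simp: LqM_holder LqR_holder)

lemma LqS_le_sum: "1 \<le> q \<Longrightarrow> finite A \<Longrightarrow> LqS q A f \<le> (\<Sum>k\<in>A. \<bar>f k\<bar>)"
proof -
  assume q: "1 \<le> q" and A: "finite A"
  have "LqS q A f \<le> LqS 1 A f" by (rule LqS_anti) (use q A in auto)
  also have "LqS 1 A f = (\<Sum>k\<in>A. \<bar>f k\<bar>)" unfolding LqS_def LqR_def by (simp add: sum_nonneg)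
  finally show ?thesis .
qed

lemma lq_norm_LqS:
  assumes q: "1 \<le> q"
  shows "lq_norm q (\<lambda>k. if k < n then f k else 0) = LqS q {..<n} f"
proof (cases "q = \<infinity>")
  case True
  have r: "range (\<lambda>k. \<bar>if k < n then f k else 0\<bar>) = insert 0 ((\<lambda>k. \<bar>f k\<bar>) ` {..<n})"
  proof (rule set_eqI, rule iffI)
    fix y assume "y \<in> range (\<lambda>k. \<bar>if k < n then f k else 0\<bar>)"
    thus "y \<in> insert 0 ((\<lambda>k. \<bar>f k\<bar>) ` {..<n})" by (auto split: if_splits)
  next
    fix y assume "y \<in> insert 0 ((\<lambda>k. \<bar>f k\<bar>) ` {..<n})"
    then consider "y = 0" | k where "k < n" "y = \<bar>f k\<bar>" by auto
    thus "y \<in> range (\<lambda>k. \<bar>if k < n then f k else 0\<bar>)"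
    proof cases
      case 1 thus ?thesis by (intro image_eqI[of _ _ n]) auto
    next
      case 2 thus ?thesis by (intro image_eqI[of _ _ k]) auto
    qed
  qed
  show ?thesis unfolding lq_norm_def LqS_def LqM_def using True r
    by (simp add: cSup_eq_Max)
next
  case False
  have "(\<Sum>k. \<bar>if k < n then f k else 0\<bar> powr real_of_ereal q) =
        (\<Sum>k\<in>{..<n}. \<bar>if k < n then f k else 0\<bar> powr real_of_ereal q)"
    by (rule suminf_finite) auto
  also have "\<dots> = (\<Sum>k\<in>{..<n}. \<bar>f k\<bar> powr real_of_ereal q)" by (rule sum.cong) auto
  finally show ?thesis unfolding lq_norm_def LqS_def LqR_def using False by simp
qed




lemma mss_facts:
  assumes "maximal_seq_space Y NY"
  shows mss_zero: "(\<lambda>k. 0) \<in> Y" and mss_zero_norm: "NY (\<lambda>k. 0) = 0"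
    and mss_nonneg: "\<And>\<sigma>. \<sigma> \<in> Y \<Longrightarrow> 0 \<le> NY \<sigma>"
    and mss_hom: "\<And>c \<sigma>. \<sigma> \<in> Y \<Longrightarrow> NY (\<lambda>k. c * \<sigma> k) = \<bar>c\<bar> * NY \<sigma>"
    and mss_l1: "l1_set \<subseteq> Y" and mss_linf: "Y \<subseteq> linf_set"
    and mss_unit: "\<And>k. NY (unitvec k) = 1"
    and mss_ideal: "\<And>\<sigma> \<alpha>. \<sigma> \<in> Y \<Longrightarrow> \<alpha> \<in> linf_set \<Longrightarrow>
        (\<lambda>k. \<alpha> k * \<sigma> k) \<in> Y \<and> NY (\<lambda>k. \<alpha> k * \<sigma> k) \<le> linf_norm \<alpha> * NY \<sigma>"
proof -
  note D = assms[unfolded maximal_seq_space_def]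
  show "(\<lambda>k. 0) \<in> Y" using D by (elim conjE) assumption
  have z: "\<forall>\<sigma>\<in>Y. 0 \<le> NY \<sigma> \<and> (NY \<sigma> = 0 \<longleftrightarrow> (\<forall>k. \<sigma> k = 0))" using D by (elim conjE) assumption
  thus "NY (\<lambda>k. 0) = 0" using \<open>(\<lambda>k. 0) \<in> Y\<close> by simp
  show "\<And>\<sigma>. \<sigma> \<in> Y \<Longrightarrow> 0 \<le> NY \<sigma>" using z by simp
  have h: "\<forall>c. \<forall>\<sigma>\<in>Y. NY (\<lambda>k. c * \<sigma> k) = \<bar>c\<bar> * NY \<sigma>" using D by (elim conjE) assumption
  thus "\<And>c \<sigma>. \<sigma> \<in> Y \<Longrightarrow> NY (\<lambda>k. c * \<sigma> k) = \<bar>c\<bar> * NY \<sigma>" by simp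
  show "l1_set \<subseteq> Y" using D by (elim conjE) assumption
  show "Y \<subseteq> linf_set" using D by (elim conjE) assumption
  have u: "\<forall>k. NY (unitvec k) = 1" using D by (elim conjE) assumption
  thus "\<And>k. NY (unitvec k) = 1" by simp
  have i: "\<forall>\<sigma>\<in>Y. \<forall>\<alpha>\<in>linf_set. (\<lambda>k. \<alpha> k * \<sigma> k) \<in> Y \<and> NY (\<lambda>k. \<alpha> k * \<sigma> k) \<le> linf_norm \<alpha> * NY \<sigma>"
    using D by (elim conjE) assumption
  thus "\<And>\<sigma> \<alpha>. \<sigma> \<in> Y \<Longrightarrow> \<alpha> \<in> linf_set \<Longrightarrow>
        (\<lambda>k. \<alpha> k * \<sigma> k) \<in> Y \<and> NY (\<lambda>k. \<alpha> k * \<sigma> k) \<le> linf_norm \<alpha> * NY \<sigma>" by blast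
qed

lemma linf_norm_le1: "(\<And>k. \<bar>\<alpha> k\<bar> \<le> 1) \<Longrightarrow> linf_norm \<alpha> \<le> 1"
  unfolding linf_norm_def by (rule cSUP_least) auto

lemma linf_set_bounded_by: "(\<And>k. \<bar>\<alpha> k\<bar> \<le> B) \<Longrightarrow> \<alpha> \<in> linf_set"
  unfolding linf_set_def mem_Collect_eq by (rule boundedI[where B = B]) auto

lemma linf_set_finsupp: "finite A \<Longrightarrow> (\<And>k. k \<notin> A \<Longrightarrow> \<alpha> k = 0) \<Longrightarrow> \<alpha> \<in> linf_set"
proof -
  assume A: "finite A" and z: "\<And>k. k \<notin> A \<Longrightarrow> \<alpha> k = 0"
  have "range \<alpha> \<subseteq> insert 0 (\<alpha> ` A)" using z by auto
  moreover have "finite (insert 0 (\<alpha> ` A))" using A by simp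
  ultimately have "bounded (range \<alpha>)" by (meson finite_imp_bounded finite_subset)
  thus ?thesis unfolding linf_set_def by simp
qed

lemma unitvec_l1: "unitvec k \<in> l1_set"
  unfolding l1_set_def unitvec_def mem_Collect_eq by (rule summable_finite[of "{k}"]) auto

lemma mss_coord:
  assumes M: "maximal_seq_space Y NY" and t: "\<tau> \<in> Y"
  shows "\<bar>\<tau> k\<bar> \<le> NY \<tau>"
proof -
  have ul: "unitvec k \<in> linf_set" by (rule linf_set_bounded_by[where B = 1]) (simp add: unitvec_def)
  have uY: "unitvec k \<in> Y" using mss_l1[OF M] unitvec_l1 by blast
  have e: "(\<lambda>j. unitvec k j * \<tau> j) = (\<lambda>j. \<tau> k * unitvec k j)" by (auto simp: unitvec_def)
  have "NY (\<lambda>j. unitvec k j * \<tau> j) \<le> linf_norm (unitvec k) * NY \<tau>" using mss_ideal[OF M t ul] by blast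
  also have "\<dots> \<le> 1 * NY \<tau>"
    by (intro mult_right_mono linf_norm_le1) (auto simp: unitvec_def mss_nonneg[OF M t])
  finally show ?thesis unfolding e using mss_hom[OF M uY] mss_unit[OF M] by simp
qed

lemma mss_dom:
  assumes M: "maximal_seq_space Y NY" and b: "\<beta> \<in> Y" and le: "\<And>k. \<bar>\<alpha> k\<bar> \<le> \<bar>\<beta> k\<bar>"
  shows "\<alpha> \<in> Y \<and> NY \<alpha> \<le> NY \<beta>"
proof -
  define \<gamma> where "\<gamma> k = (if \<beta> k = 0 then 0 else \<alpha> k / \<beta> k)" for k
  have g1: "\<bar>\<gamma> k\<bar> \<le> 1" for k using le[of k] unfolding \<gamma>_def by (auto simp: abs_div divide_le_eq_1)
  have gl: "\<gamma> \<in> linf_set" by (rule linf_set_bounded_by[where B = 1]) (rule g1)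
  have e: "(\<lambda>k. \<gamma> k * \<beta> k) = \<alpha>"
  proof
    fix k show "\<gamma> k * \<beta> k = \<alpha> k" using le[of k] unfolding \<gamma>_def by auto
  qed
  have "\<alpha> \<in> Y" using mss_ideal[OF M b gl] e by simp
  moreover have "NY \<alpha> \<le> linf_norm \<gamma> * NY \<beta>" using mss_ideal[OF M b gl] e by simp
  moreover have "linf_norm \<gamma> * NY \<beta> \<le> 1 * NY \<beta>"
    by (intro mult_right_mono linf_norm_le1 g1 mss_nonneg[OF M b])
  ultimately show ?thesis by simp
qed

lemma rearr_facts:
  assumes s: "\<sigma> \<in> linf_set" and A: "finite A" and inj: "inj_on \<phi> A"
    and t: "\<tau> = (\<lambda>k. if k \<in> A then \<sigma> (\<phi> k) else 0)"
  shows "0 \<le> rearr \<tau> m \<and> rearr \<tau> m \<le> rearr \<sigma> m"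
proof -
  define S where "S f = {t. 0 \<le> t \<and> finite {k. t < \<bar>f k\<bar>} \<and> card {k. t < \<bar>f k\<bar>} \<le> m}" for f :: "nat \<Rightarrow> real"
  obtain B where B: "\<And>k. \<bar>\<sigma> k\<bar> \<le> B" using s unfolding linf_set_def bounded_iff by auto
  have e: "{k. max B 0 < \<bar>\<sigma> k\<bar>} = {}" using B by (auto simp: not_less intro: order_trans)
  have "max B 0 \<in> S \<sigma>" unfolding S_def mem_Collect_eq e by simp
  hence ne: "S \<sigma> \<noteq> {}" by blast
  have sub: "S \<sigma> \<subseteq> S \<tau>"
  proof
    fix u assume u: "u \<in> S \<sigma>"
    have sub1: "{k. u < \<bar>\<tau> k\<bar>} \<subseteq> A" using u unfolding S_def t by (auto split: if_splits)
    have fin: "finite {k. u < \<bar>\<tau> k\<bar>}" using sub1 A by (rule finite_subset)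
    have "card {k. u < \<bar>\<tau> k\<bar>} \<le> card {k. u < \<bar>\<sigma> k\<bar>}"
    proof (rule card_inj_on_le)
      show "inj_on \<phi> {k. u < \<bar>\<tau> k\<bar>}" using inj sub1 by (rule inj_on_subset)
      show "\<phi> ` {k. u < \<bar>\<tau> k\<bar>} \<subseteq> {k. u < \<bar>\<sigma> k\<bar>}" using sub1 unfolding t by auto
      show "finite {k. u < \<bar>\<sigma> k\<bar>}" using u unfolding S_def by auto
    qed
    thus "u \<in> S \<tau>" using u fin unfolding S_def by auto
  qed
  have bdd: "bdd_below (S \<tau>)" unfolding S_def by (rule bdd_belowI[of _ 0]) auto
  have "rearr \<tau> m = Inf (S \<tau>)" "rearr \<sigma> m = Inf (S \<sigma>)" unfolding rearr_def S_def by auto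
  moreover have "Inf (S \<tau>) \<le> Inf (S \<sigma>)" by (rule cInf_superset_mono[OF ne bdd sub])
  moreover have "0 \<le> Inf (S \<tau>)" by (rule cInf_greatest) (use ne sub in \<open>auto simp: S_def\<close>)
  ultimately show ?thesis by simp
qed

lemma msym_inj:
  assumes M: "maximal_symmetric_seq_space Y NY" and s: "\<sigma> \<in> Y" and A: "finite A"
    and inj: "inj_on \<phi> A" and t: "\<tau> = (\<lambda>k. if k \<in> A then \<sigma> (\<phi> k) else 0)"
  shows "\<tau> \<in> Y \<and> NY \<tau> \<le> NY \<sigma>"
proof -
  have M1: "maximal_seq_space Y NY" using M unfolding maximal_symmetric_seq_space_def by blast
  have sym: "\<And>\<sigma>. \<sigma> \<in> linf_set \<Longrightarrow> (\<sigma> \<in> Y \<longleftrightarrow> rearr \<sigma> \<in> Y) \<and> (\<sigma> \<in> Y \<longrightarrow> NY (rearr \<sigma>) = NY \<sigma>)"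
    using M unfolding maximal_symmetric_seq_space_def by blast
  have sl: "\<sigma> \<in> linf_set" using s mss_linf[OF M1] by blast
  have tl: "\<tau> \<in> linf_set" by (rule linf_set_finsupp[OF A]) (simp add: t)
  have rs: "rearr \<sigma> \<in> Y" "NY (rearr \<sigma>) = NY \<sigma>" using sym[OF sl] s by auto
  have rf: "0 \<le> rearr \<tau> m \<and> rearr \<tau> m \<le> rearr \<sigma> m" for m by (rule rearr_facts[OF sl A inj t])
  have "rearr \<tau> \<in> Y \<and> NY (rearr \<tau>) \<le> NY (rearr \<sigma>)"
    by (rule mss_dom[OF M1 rs(1)]) (use rf in \<open>metis abs_of_nonneg order_trans\<close>)
  hence "\<tau> \<in> Y" "NY (rearr \<tau>) \<le> NY \<sigma>" using sym[OF tl] rs by auto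
  thus ?thesis using sym[OF tl] by auto
qed




lemma diag_apply:
  assumes s: "\<sigma> \<in> linf_set"
  shows "apply_bcontfun (diag_op \<sigma> g) j = \<sigma> j * apply_bcontfun g j"
proof -
  obtain B where B: "\<And>k. \<bar>\<sigma> k\<bar> \<le> B" using s unfolding linf_set_def bounded_iff by auto
  have "(\<lambda>k. \<sigma> k * apply_bcontfun g k) \<in> bcontfun"
  proof (rule bcontfun_normI)
    show "continuous_on UNIV (\<lambda>k. \<sigma> k * apply_bcontfun g k)" by simp
    fix k
    have "norm (\<sigma> k * apply_bcontfun g k) = \<bar>\<sigma> k\<bar> * \<bar>apply_bcontfun g k\<bar>" by (simp add: abs_mult)
    also have "\<dots> \<le> B * norm g"
      using B[of k] norm_bounded[of g k] by (intro mult_mono) auto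
    finally show "norm (\<sigma> k * apply_bcontfun g k) \<le> B * norm g" .
  qed
  thus ?thesis unfolding diag_op_def by (simp add: Bcontfun_inverse)
qed

lemma diag_coord:
  assumes s: "\<sigma> \<in> linf_set"
  shows "\<bar>\<sigma> j * apply_bcontfun g j\<bar> \<le> norm (diag_op \<sigma> g)"
  using norm_bounded[of "diag_op \<sigma> g" j] diag_apply[OF s] by simp

lemma diag_approx:
  assumes s: "\<sigma> \<in> linf_set" and e: "0 < \<epsilon>"
  shows "\<exists>j. (1 - \<epsilon>) * norm (diag_op \<sigma> g) \<le> \<bar>\<sigma> j * apply_bcontfun g j\<bar>"
proof (rule ccontr)
  assume "\<not> ?thesis"
  hence lt: "\<And>j. \<bar>\<sigma> j * apply_bcontfun g j\<bar> < (1 - \<epsilon>) * norm (diag_op \<sigma> g)" by (simp add: not_le)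
  have "norm (diag_op \<sigma> g) \<le> (1 - \<epsilon>) * norm (diag_op \<sigma> g)"
    by (rule norm_bound) (use lt diag_apply[OF s] in \<open>auto intro: less_imp_le\<close>)
  hence "\<epsilon> * norm (diag_op \<sigma> g) \<le> 0" by (simp add: algebra_simps)
  hence "norm (diag_op \<sigma> g) \<le> 0" using e by (simp add: mult_le_0_iff)
  hence "norm (diag_op \<sigma> g) = 0" using norm_ge_zero[of "diag_op \<sigma> g"] by linarith
  hence "(1 - \<epsilon>) * norm (diag_op \<sigma> g) = 0" by (simp only: mult_zero_right)
  thus False using lt[of 0] abs_ge_zero[of "\<sigma> 0 * apply_bcontfun g 0"] by linarith
qed

lemma eval_bl: "bounded_linear (\<lambda>g::nat \<Rightarrow>\<^sub>C real. apply_bcontfun g j)"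
proof (rule bounded_linear_intro[where K = 1])
  fix x :: "nat \<Rightarrow>\<^sub>C real"
  show "norm (apply_bcontfun x j) \<le> norm x * 1" using norm_bounded[of x j] by simp
qed auto

lemma LqS_empty: "LqS q {} f = 0"
  unfolding LqS_def LqM_def LqR_def by simp

lemma LqS_cong_abs:
  "1 \<le> q \<Longrightarrow> finite A \<Longrightarrow> (\<And>k. k \<in> A \<Longrightarrow> \<bar>f k\<bar> = \<bar>g k\<bar>) \<Longrightarrow> LqS q A f = LqS q A g"
  by (rule antisym; rule LqS_mono) auto

lemma LqS_zero: "1 \<le> q \<Longrightarrow> finite A \<Longrightarrow> LqS q A (\<lambda>k. 0) = 0"
  using LqS_le_sum[of q A "\<lambda>k. 0"] LqS_nonneg[of A q "\<lambda>k. 0"] by simp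

locale setting =
  fixes q r :: ereal and Y X :: "(nat \<Rightarrow> real) set" and NY NX :: "(nat \<Rightarrow> real) \<Rightarrow> real"
    and T :: "'e::banach \<Rightarrow> 'f::banach" and n :: nat
  assumes r1: "1 \<le> r" and rq: "r \<le> q" and M: "maximal_symmetric_seq_space Y NY"
    and Xdef: "X = IDL_set Y NY (lq_set q) (lq_norm q)"
    and NXdef: "\<forall>\<sigma>\<in>X. NX \<sigma> = IDL_norm Y NY (lq_norm q) \<sigma>"
    and T: "bounded_linear T"
begin

lemma q1: "1 \<le> q" using r1 rq by (rule order_trans)

lemma M1: "maximal_seq_space Y NY" using M unfolding maximal_symmetric_seq_space_def by blast

lemma lq_fs: "lq_norm q (\<lambda>k. (if k < n then w k else 0) * \<tau> k) = LqS q {..<n} (\<lambda>k. w k * \<tau> k)"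
proof -
  have "(\<lambda>k. (if k < n then w k else 0) * \<tau> k) = (\<lambda>k. if k < n then w k * \<tau> k else 0)" by auto
  thus ?thesis using lq_norm_LqS[OF q1] by simp
qed

lemma W_bound:
  assumes t: "\<tau> \<in> Y" "NY \<tau> \<le> 1"
  shows "LqS q {..<n} (\<lambda>k. w k * \<tau> k) \<le> (\<Sum>k<n. \<bar>w k\<bar>) * NY \<tau>"
proof -
  have "LqS q {..<n} (\<lambda>k. w k * \<tau> k) \<le> (\<Sum>k<n. \<bar>w k * \<tau> k\<bar>)" by (rule LqS_le_sum[OF q1]) simp
  also have "\<dots> \<le> (\<Sum>k<n. \<bar>w k\<bar> * NY \<tau>)"
    by (intro sum_mono) (auto simp: abs_mult intro: mult_left_mono mss_coord[OF M1 t(1)])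
  finally show ?thesis by (simp add: sum_distrib_right)
qed

lemma fs_in_X: "(\<lambda>k. if k < n then w k else 0) \<in> X"
  unfolding Xdef IDL_set_def mem_Collect_eq
proof (intro conjI ballI exI[of _ "\<Sum>k<n. \<bar>w k\<bar>"])
  fix \<tau> assume t: "\<tau> \<in> Y"
  show "(\<lambda>k. (if k < n then w k else 0) * \<tau> k) \<in> lq_set q"
  proof (cases "q = \<infinity>")
    case True
    thus ?thesis unfolding lq_set_def by (simp, intro linf_set_finsupp[of "{..<n}"]) auto
  next
    case False
    thus ?thesis unfolding lq_set_def by (simp, intro summable_finite[of "{..<n}"]) auto
  qed
  have "LqS q {..<n} (\<lambda>k. w k * \<tau> k) \<le> (\<Sum>k<n. \<bar>w k\<bar>) * NY \<tau>"
  proof -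
    have "LqS q {..<n} (\<lambda>k. w k * \<tau> k) \<le> (\<Sum>k<n. \<bar>w k * \<tau> k\<bar>)" by (rule LqS_le_sum[OF q1]) simp
    also have "\<dots> \<le> (\<Sum>k<n. \<bar>w k\<bar> * NY \<tau>)"
      by (intro sum_mono) (auto simp: abs_mult intro: mult_left_mono mss_coord[OF M1 t])
    finally show ?thesis by (simp add: sum_distrib_right)
  qed
  thus "lq_norm q (\<lambda>k. (if k < n then w k else 0) * \<tau> k) \<le> (\<Sum>k<n. \<bar>w k\<bar>) * NY \<tau>"
    by (simp add: lq_fs)
qed

lemma NX_eq: "NX (\<lambda>k. if k < n then w k else 0) =
   Sup {LqS q {..<n} (\<lambda>k. w k * \<tau> k) | \<tau>. \<tau> \<in> Y \<and> NY \<tau> \<le> 1}"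
  using NXdef fs_in_X[of w] unfolding IDL_norm_def by (simp add: lq_fs)

lemma W_bdd: "bdd_above {LqS q {..<n} (\<lambda>k. w k * \<tau> k) | \<tau>. \<tau> \<in> Y \<and> NY \<tau> \<le> 1}"
proof (rule bdd_aboveI[where M = "\<Sum>k<n. \<bar>w k\<bar>"])
  fix v assume "v \<in> {LqS q {..<n} (\<lambda>k. w k * \<tau> k) | \<tau>. \<tau> \<in> Y \<and> NY \<tau> \<le> 1}"
  then obtain \<tau> where t: "\<tau> \<in> Y" "NY \<tau> \<le> 1" "v = LqS q {..<n} (\<lambda>k. w k * \<tau> k)" by blast
  have "v \<le> (\<Sum>k<n. \<bar>w k\<bar>) * NY \<tau>" using W_bound[OF t(1,2)] t(3) by simp
  also have "\<dots> \<le> (\<Sum>k<n. \<bar>w k\<bar>) * 1" by (intro mult_left_mono t(2)) (simp add: sum_nonneg)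
  finally show "v \<le> (\<Sum>k<n. \<bar>w k\<bar>)" by simp
qed

lemma NX_upper:
  assumes "\<tau> \<in> Y" "NY \<tau> \<le> 1"
  shows "LqS q {..<n} (\<lambda>k. w k * \<tau> k) \<le> NX (\<lambda>k. if k < n then w k else 0)"
  unfolding NX_eq by (rule cSup_upper) (use assms W_bdd in auto)

lemma NX_least:
  assumes "\<And>\<tau>. \<tau> \<in> Y \<Longrightarrow> NY \<tau> \<le> 1 \<Longrightarrow> LqS q {..<n} (\<lambda>k. w k * \<tau> k) \<le> c"
  shows "NX (\<lambda>k. if k < n then w k else 0) \<le> c"
  unfolding NX_eq
proof (rule cSup_least)
  show "{LqS q {..<n} (\<lambda>k. w k * \<tau> k) | \<tau>. \<tau> \<in> Y \<and> NY \<tau> \<le> 1} \<noteq> {}"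
    using mss_zero[OF M1] mss_zero_norm[OF M1] by auto
qed (use assms in auto)

lemma omega_eq: "omega r n x = Sup {LqS r {..<n} (\<lambda>k. a (x k)) | a. bounded_linear a \<and> onorm a \<le> 1}"
  unfolding omega_def using lq_norm_LqS[OF r1] by simp

lemma omega_upper:
  assumes "bounded_linear a" "onorm a \<le> 1"
  shows "LqS r {..<n} (\<lambda>k. a (x k)) \<le> omega r n x"
  unfolding omega_eq
proof (rule cSup_upper)
  show "LqS r {..<n} (\<lambda>k. a (x k)) \<in> {LqS r {..<n} (\<lambda>k. a (x k)) | a. bounded_linear a \<and> onorm a \<le> 1}"
    using assms by blast
  show "bdd_above {LqS r {..<n} (\<lambda>k. a (x k)) | a. bounded_linear a \<and> onorm a \<le> 1}"
  proof (rule bdd_aboveI[where M = "\<Sum>k<n. norm (x k)"])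
    fix v assume "v \<in> {LqS r {..<n} (\<lambda>k. a (x k)) | a. bounded_linear a \<and> onorm a \<le> 1}"
    then obtain b where b: "bounded_linear b" "onorm b \<le> 1" "v = LqS r {..<n} (\<lambda>k. b (x k))" by blast
    have "v \<le> (\<Sum>k<n. \<bar>b (x k)\<bar>)" using LqS_le_sum[OF r1, of "{..<n}"] b(3) by simp
    also have "\<dots> \<le> (\<Sum>k<n. norm (x k))"
    proof (intro sum_mono)
      fix k
      have "norm (b (x k)) \<le> onorm b * norm (x k)" by (rule onorm[OF b(1)])
      also have "\<dots> \<le> 1 * norm (x k)" by (intro mult_right_mono b(2)) simp
      finally show "\<bar>b (x k)\<bar> \<le> norm (x k)" by simp
    qed
    finally show "v \<le> (\<Sum>k<n. norm (x k))" .
  qed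
qed

lemma omega_least:
  assumes "\<And>a. bounded_linear a \<Longrightarrow> onorm a \<le> 1 \<Longrightarrow> LqS r {..<n} (\<lambda>k. a (x k)) \<le> c"
  shows "omega r n x \<le> c"
  unfolding omega_eq
proof (rule cSup_least)
  have "bounded_linear (\<lambda>v::'a. 0::real)" by simp
  moreover have "onorm (\<lambda>v::'a. 0::real) \<le> 1" by (simp add: onorm_zero)
  ultimately show "{LqS r {..<n} (\<lambda>k. a (x k)) | a. bounded_linear a \<and> onorm a \<le> 1} \<noteq> {}" by blast
qed (use assms in auto)

lemma omega_norm:
  assumes x: "omega r n x \<le> 1" and k: "k < n"
  shows "norm (x k) \<le> 1"
proof -
  obtain f where f: "bounded_linear f" "onorm f \<le> 1" "f (x k) = norm (x k)" using norming_functional by blast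
  have "\<bar>f (x k)\<bar> \<le> LqS r {..<n} (\<lambda>k. f (x k))" using LqS_coord[OF r1, of "{..<n}" k] k by simp
  also have "\<dots> \<le> omega r n x" by (rule omega_upper[OF f(1,2)])
  finally show ?thesis using f(3) x by simp
qed

lemma omega_zero: "omega r n (\<lambda>k. 0) \<le> 1"
  by (rule omega_least) (simp add: linear_simps LqS_zero[OF r1])

definition Lset where "Lset = {NX (\<lambda>k. if k < n then norm (T (x k)) else 0) | x. omega r n x \<le> 1}"

lemma LHS_eq: "pi_X NX r n T = Sup Lset"
  unfolding pi_X_def Lset_def ..

lemma Lset_bound:
  assumes x: "omega r n x \<le> 1"
  shows "NX (\<lambda>k. if k < n then norm (T (x k)) else 0) \<le> real n * onorm T"
proof (rule NX_least)
  fix \<tau> assume t: "\<tau> \<in> Y" "NY \<tau> \<le> 1"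
  have "LqS q {..<n} (\<lambda>k. norm (T (x k)) * \<tau> k) \<le> (\<Sum>k<n. \<bar>norm (T (x k)) * \<tau> k\<bar>)"
    by (rule LqS_le_sum[OF q1]) simp
  also have "\<dots> \<le> (\<Sum>k<n. onorm T)"
  proof (intro sum_mono)
    fix k assume "k \<in> {..<n}"
    hence nk: "norm (x k) \<le> 1" using omega_norm[OF x] by simp
    have "norm (T (x k)) \<le> onorm T * norm (x k)" by (rule onorm[OF T])
    also have "\<dots> \<le> onorm T * 1" by (intro mult_left_mono nk onorm_pos_le T)
    finally have a: "norm (T (x k)) \<le> onorm T" by simp
    have b: "\<bar>\<tau> k\<bar> \<le> 1" using mss_coord[OF M1 t(1), of k] t(2) by simp
    have "\<bar>norm (T (x k)) * \<tau> k\<bar> = norm (T (x k)) * \<bar>\<tau> k\<bar>" by (simp add: abs_mult)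
    also have "\<dots> \<le> onorm T * 1" by (intro mult_mono a b) (auto simp: onorm_pos_le T)
    finally show "\<bar>norm (T (x k)) * \<tau> k\<bar> \<le> onorm T" by simp
  qed
  also have "\<dots> = real n * onorm T" by simp
  finally show "LqS q {..<n} (\<lambda>k. norm (T (x k)) * \<tau> k) \<le> real n * onorm T" .
qed

lemma Lset_bdd: "bdd_above Lset"
  unfolding Lset_def by (rule bdd_aboveI[where M = "real n * onorm T"]) (use Lset_bound in auto)

lemma Lset_upper: "omega r n x \<le> 1 \<Longrightarrow> NX (\<lambda>k. if k < n then norm (T (x k)) else 0) \<le> pi_X NX r n T"
  unfolding LHS_eq by (rule cSup_upper) (use Lset_bdd in \<open>auto simp: Lset_def\<close>)

lemma Lset_ne: "Lset \<noteq> {}"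
  unfolding Lset_def using omega_zero by blast

lemma pi_pq_eq: "pi_pq q r n S = Sup {LqS q {..<n} (\<lambda>k. norm (S (x k))) | x. omega r n x \<le> 1}"
  unfolding pi_pq_def pi_X_def using lq_norm_LqS[OF q1] by simp

end




context setting
begin

lemma L_nonneg: "0 \<le> pi_X NX r n T"
proof -
  have "LqS q {..<n} (\<lambda>k. norm (T 0) * (0::real)) \<le> NX (\<lambda>k. if k < n then norm (T ((\<lambda>k. 0) k)) else 0)"
    by (rule NX_upper) (use mss_zero[OF M1] mss_zero_norm[OF M1] in auto)
  also have "\<dots> \<le> pi_X NX r n T" by (rule Lset_upper[OF omega_zero])
  finally show ?thesis using LqS_nonneg[of "{..<n}" q] by (meson finite_lessThan order_trans)
qed

lemma key:
  fixes R :: "'f \<Rightarrow> (nat \<Rightarrow>\<^sub>C real)"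
  assumes R: "bounded_linear R" "onorm R \<le> 1" and s: "\<sigma> \<in> Y" "NY \<sigma> \<le> 1" and x: "omega r n x \<le> 1"
  shows "LqS q {..<n} (\<lambda>k. norm (diag_op \<sigma> (R (T (x k))))) \<le> pi_X NX r n T"
proof -
  define Q where "Q = LqS q {..<n} (\<lambda>k. norm (diag_op \<sigma> (R (T (x k)))))"
  define L where "L = pi_X NX r n T"
  have sl: "\<sigma> \<in> linf_set" using s(1) mss_linf[OF M1] by blast
  have main: "(1 - \<epsilon>) * Q \<le> L" if e: "0 < \<epsilon>" "\<epsilon> < 1" for \<epsilon>
  proof -
    have "\<forall>k. \<exists>j. (1 - \<epsilon>) * norm (diag_op \<sigma> (R (T (x k)))) \<le> \<bar>\<sigma> j * apply_bcontfun (R (T (x k))) j\<bar>"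
      using diag_approx[OF sl e(1)] by blast
    then obtain j where j: "\<And>k. (1 - \<epsilon>) * norm (diag_op \<sigma> (R (T (x k)))) \<le> \<bar>\<sigma> (j k) * apply_bcontfun (R (T (x k))) (j k)\<bar>"
      by metis
    define rep where "rep k = (LEAST k'. j k' = j k)" for k
    have rep_j: "j (rep k) = j k" for k unfolding rep_def by (rule LeastI[of _ k]) simp
    have rep_le: "rep k \<le> k" for k unfolding rep_def by (rule Least_le) simp
    have rep_rep: "rep (rep k) = rep k" for k
    proof -
      have "rep (rep k) = (LEAST k'. j k' = j (rep k))" by (simp add: rep_def)
      thus ?thesis using rep_j[of k] by (simp add: rep_def)
    qed
    define G where "G y = {k \<in> {..<n}. rep k = y}" for y
    have finG: "finite (G y)" for y unfolding G_def by simp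
    have Gj: "k \<in> G y \<Longrightarrow> j k = j y" for k y unfolding G_def using rep_j by auto
    define c where "c k = \<bar>\<sigma> (j k)\<bar> * \<bar>apply_bcontfun (R (T (x k))) (j k)\<bar>" for k
    define d where "d y k = apply_bcontfun (R (T (x k))) (j y)" for y k
    define aj where "aj y v = apply_bcontfun (R (T v)) (j y)" for y v
    have aj_bl: "bounded_linear (aj y)" for y
      unfolding aj_def by (intro bounded_linear_compose[OF eval_bl] bounded_linear_compose[OF R(1) T])
    have aj_le: "\<bar>aj y v\<bar> \<le> norm (T v)" for y v
    proof -
      have "\<bar>aj y v\<bar> \<le> norm (R (T v))" unfolding aj_def using norm_bounded[of "R (T v)" "j y"] by simp
      also have "\<dots> \<le> onorm R * norm (T v)" by (rule onorm[OF R(1)])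
      also have "\<dots> \<le> 1 * norm (T v)" by (intro mult_right_mono R(2)) simp
      finally show ?thesis by simp
    qed
    have "\<forall>y. \<exists>\<beta>. (\<Sum>k\<in>G y. \<beta> k * d y k) = LqS q (G y) (d y) \<and>
              (\<forall>b. \<bar>\<Sum>k\<in>G y. \<beta> k * b k\<bar> \<le> LqS q (G y) b)"
      using LqS_holder[OF q1 finG] by blast
    then obtain \<beta> where \<beta>: "\<And>y. (\<Sum>k\<in>G y. \<beta> y k * d y k) = LqS q (G y) (d y)"
      "\<And>y b. \<bar>\<Sum>k\<in>G y. \<beta> y k * b k\<bar> \<le> LqS q (G y) b" by metis
    define z where "z y = (\<Sum>k\<in>G y. \<beta> y k *\<^sub>R x k)" for y
    define \<tau> where "\<tau> y = (if y < n \<and> rep y = y then \<sigma> (j y) else 0)" for y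
    have lin: "a (z y) = (\<Sum>k\<in>G y. \<beta> y k * a (x k))" if a: "bounded_linear a" for a :: "'e \<Rightarrow> real" and y
      unfolding z_def using a by (simp add: linear_sum bounded_linear.linear linear_scale o_def)
    have sa: "(1 - \<epsilon>) * Q \<le> LqS q {..<n} c"
    proof -
      have "(1 - \<epsilon>) * Q = LqS q {..<n} (\<lambda>k. (1 - \<epsilon>) * norm (diag_op \<sigma> (R (T (x k)))))"
        unfolding Q_def using LqS_hom[OF q1, of "{..<n}" "1 - \<epsilon>"] e by simp
      also have "\<dots> \<le> LqS q {..<n} c"
      proof (rule LqS_mono[OF q1])
        fix k
        have "\<bar>(1 - \<epsilon>) * norm (diag_op \<sigma> (R (T (x k))))\<bar> = (1 - \<epsilon>) * norm (diag_op \<sigma> (R (T (x k))))"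
          using e by simp
        also have "\<dots> \<le> c k" using j[of k] unfolding c_def by (simp add: abs_mult)
        finally show "\<bar>(1 - \<epsilon>) * norm (diag_op \<sigma> (R (T (x k))))\<bar> \<le> \<bar>c k\<bar>" by simp
      qed simp
      finally show ?thesis .
    qed
    have sb: "LqS q {..<n} c = LqS q {..<n} (\<lambda>y. LqS q (G y) c)"
      unfolding G_def by (rule LqS_group[OF q1, symmetric]) (use rep_le in \<open>auto intro: le_less_trans\<close>)
    have sc: "LqS q (G y) c \<le> \<bar>norm (T (z y)) * \<tau> y\<bar>" if y: "y < n" for y
    proof (cases "rep y = y")
      case False
      have "G y = {}" unfolding G_def using False rep_rep by auto
      thus ?thesis by (simp add: LqS_empty)
    next
      case True
      have "LqS q (G y) c = LqS q (G y) (\<lambda>k. \<sigma> (j y) * d y k)"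
        by (rule LqS_cong_abs[OF q1 finG]) (simp add: c_def d_def Gj abs_mult)
      also have "\<dots> = \<bar>\<sigma> (j y)\<bar> * LqS q (G y) (d y)" by (rule LqS_hom[OF q1 finG])
      also have "LqS q (G y) (d y) = aj y (z y)"
        unfolding lin[OF aj_bl] \<beta>(1)[symmetric] by (simp add: d_def aj_def)
      also have "\<bar>\<sigma> (j y)\<bar> * aj y (z y) \<le> \<bar>\<sigma> (j y)\<bar> * norm (T (z y))"
        using aj_le[of y "z y"] by (intro mult_left_mono) auto
      also have "\<dots> = \<bar>norm (T (z y)) * \<tau> y\<bar>" using True y by (simp add: \<tau>_def abs_mult)
      finally show ?thesis .
    qed
    have sd: "LqS q {..<n} (\<lambda>y. LqS q (G y) c) \<le> LqS q {..<n} (\<lambda>y. norm (T (z y)) * \<tau> y)"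
    proof (rule LqS_mono[OF q1])
      fix y assume "y \<in> {..<n}"
      thus "\<bar>LqS q (G y) c\<bar> \<le> \<bar>norm (T (z y)) * \<tau> y\<bar>" using sc LqS_nonneg[OF finG] by simp
    qed simp
    have zO: "omega r n z \<le> 1"
    proof (rule omega_least)
      fix a :: "'e \<Rightarrow> real" assume a: "bounded_linear a" "onorm a \<le> 1"
      have az: "\<bar>a (z y)\<bar> \<le> LqS r (G y) (\<lambda>k. a (x k))" for y
      proof -
        have "\<bar>a (z y)\<bar> \<le> LqS q (G y) (\<lambda>k. a (x k))" unfolding lin[OF a(1)] by (rule \<beta>(2))
        also have "\<dots> \<le> LqS r (G y) (\<lambda>k. a (x k))" by (rule LqS_anti[OF r1 rq finG])
        finally show ?thesis .
      qed
      have "LqS r {..<n} (\<lambda>y. a (z y)) \<le> LqS r {..<n} (\<lambda>y. LqS r (G y) (\<lambda>k. a (x k)))"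
        by (rule LqS_mono[OF r1]) (use az LqS_nonneg[OF finG] in auto)
      also have "\<dots> = LqS r {..<n} (\<lambda>k. a (x k))"
        unfolding G_def by (rule LqS_group[OF r1]) (use rep_le in \<open>auto intro: le_less_trans\<close>)
      also have "\<dots> \<le> omega r n x" by (rule omega_upper[OF a])
      finally show "LqS r {..<n} (\<lambda>y. a (z y)) \<le> 1" using x by simp
    qed
    have tY: "\<tau> \<in> Y \<and> NY \<tau> \<le> NY \<sigma>"
    proof (rule msym_inj[OF M s(1)])
      show "finite {y. y < n \<and> rep y = y}" by simp
      show "inj_on j {y. y < n \<and> rep y = y}"
      proof (rule inj_onI)
        fix y1 y2 assume a: "y1 \<in> {y. y < n \<and> rep y = y}" "y2 \<in> {y. y < n \<and> rep y = y}" "j y1 = j y2"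
        have "rep y1 = rep y2" unfolding rep_def using a(3) by simp
        thus "y1 = y2" using a(1,2) by simp
      qed
      show "\<tau> = (\<lambda>k. if k \<in> {y. y < n \<and> rep y = y} then \<sigma> (j k) else 0)" by (auto simp: \<tau>_def)
    qed
    have "LqS q {..<n} (\<lambda>y. norm (T (z y)) * \<tau> y) \<le> NX (\<lambda>k. if k < n then norm (T (z k)) else 0)"
      by (rule NX_upper) (use tY s in auto)
    also have "\<dots> \<le> L" unfolding L_def by (rule Lset_upper[OF zO])
    finally show ?thesis using sa sb sd by linarith
  qed
  have L0: "0 \<le> L" unfolding L_def by (rule L_nonneg)
  show ?thesis
  proof (rule ccontr)
    assume "\<not> ?thesis"
    hence QL: "L < Q" unfolding Q_def L_def by simp
    define \<epsilon> where "\<epsilon> = (Q - L) / (2 * Q)"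
    have Qp: "0 < Q" using QL L0 by simp
    have e0: "0 < \<epsilon>" unfolding \<epsilon>_def using QL Qp by simp
    have e1: "\<epsilon> < 1" unfolding \<epsilon>_def using QL Qp L0 by (simp add: field_simps)
    have "(1 - \<epsilon>) * Q = (Q + L) / 2" unfolding \<epsilon>_def using Qp by (simp add: field_simps)
    thus False using main[OF e0 e1] QL by simp
  qed
qed

definition RHSset where
  "RHSset = {pi_pq q r n (diag_op \<sigma> \<circ> R \<circ> T) | R \<sigma>.
           bounded_linear (R :: 'f \<Rightarrow> (nat \<Rightarrow>\<^sub>C real)) \<and> onorm R \<le> 1 \<and> \<sigma> \<in> Y \<and> NY \<sigma> \<le> 1}"

lemma rhs_le:
  fixes R :: "'f \<Rightarrow> (nat \<Rightarrow>\<^sub>C real)"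
  assumes R: "bounded_linear R" "onorm R \<le> 1" and s: "\<sigma> \<in> Y" "NY \<sigma> \<le> 1"
  shows "pi_pq q r n (diag_op \<sigma> \<circ> R \<circ> T) \<le> pi_X NX r n T"
  unfolding pi_pq_eq
proof (rule cSup_least)
  show "{LqS q {..<n} (\<lambda>k. norm ((diag_op \<sigma> \<circ> R \<circ> T) (x k))) | x. omega r n x \<le> 1} \<noteq> {}"
    using omega_zero by blast
qed (use key[OF R s] in auto)

lemma inner_upper:
  fixes R :: "'f \<Rightarrow> (nat \<Rightarrow>\<^sub>C real)"
  assumes R: "bounded_linear R" "onorm R \<le> 1" and s: "\<sigma> \<in> Y" "NY \<sigma> \<le> 1" and x: "omega r n x \<le> 1"
  shows "LqS q {..<n} (\<lambda>k. norm (diag_op \<sigma> (R (T (x k))))) \<le> pi_pq q r n (diag_op \<sigma> \<circ> R \<circ> T)"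
  unfolding pi_pq_eq
proof (rule cSup_upper)
  show "LqS q {..<n} (\<lambda>k. norm (diag_op \<sigma> (R (T (x k)))))
        \<in> {LqS q {..<n} (\<lambda>k. norm ((diag_op \<sigma> \<circ> R \<circ> T) (x k))) | x. omega r n x \<le> 1}"
    using x by auto
  show "bdd_above {LqS q {..<n} (\<lambda>k. norm ((diag_op \<sigma> \<circ> R \<circ> T) (x k))) | x. omega r n x \<le> 1}"
    by (rule bdd_aboveI[where M = "pi_X NX r n T"]) (use key[OF R s] in auto)
qed

lemma RHS_bdd: "bdd_above RHSset"
  unfolding RHSset_def by (rule bdd_aboveI[where M = "pi_X NX r n T"]) (use rhs_le in auto)

lemma RHS_ne: "RHSset \<noteq> {}"
proof -
  have "bounded_linear (\<lambda>v::'f. 0 :: nat \<Rightarrow>\<^sub>C real)" by simp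
  moreover have "onorm (\<lambda>v::'f. 0 :: nat \<Rightarrow>\<^sub>C real) \<le> 1" by (simp add: onorm_zero)
  ultimately show ?thesis unfolding RHSset_def using mss_zero[OF M1] mss_zero_norm[OF M1] by fastforce
qed

lemma R_construct:
  fixes x :: "nat \<Rightarrow> 'e"
  shows "\<exists>R :: 'f \<Rightarrow> (nat \<Rightarrow>\<^sub>C real). bounded_linear R \<and> onorm R \<le> 1 \<and>
           (\<forall>k<n. apply_bcontfun (R (T (x k))) k = norm (T (x k)))"
proof -
  have "\<forall>k. \<exists>f::'f \<Rightarrow> real. bounded_linear f \<and> onorm f \<le> 1 \<and> f (T (x k)) = norm (T (x k))"
    using norming_functional by blast
  then obtain f where f: "\<And>k. bounded_linear (f k)" "\<And>k. onorm (f k) \<le> 1"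
    "\<And>k. f k (T (x k)) = norm (T (x k))" by metis
  have fle: "\<bar>f k v\<bar> \<le> norm v" for k v
  proof -
    have "norm (f k v) \<le> onorm (f k) * norm v" by (rule onorm[OF f(1)])
    also have "\<dots> \<le> 1 * norm v" by (intro mult_right_mono f(2)) simp
    finally show ?thesis by simp
  qed
  define R where "R v = Bcontfun (\<lambda>k. if k < n then f k v else 0)" for v
  have inb: "(\<lambda>k. if k < n then f k v else 0) \<in> bcontfun" for v
    by (rule bcontfun_normI[where b = "norm v"]) (auto simp: fle)
  have Rapp: "apply_bcontfun (R v) k = (if k < n then f k v else 0)" for v k
    unfolding R_def using inb by (simp add: Bcontfun_inverse)
  have Rn: "norm (R v) \<le> norm v" for v
    by (rule norm_bound) (auto simp: Rapp fle)
  have bl: "bounded_linear R"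
  proof (rule bounded_linear_intro[where K = 1])
    fix u v show "R (u + v) = R u + R v"
      by (rule bcontfun_eqI) (simp add: Rapp linear_add[OF bounded_linear.linear[OF f(1)]])
    fix c :: real and w show "R (c *\<^sub>R w) = c *\<^sub>R R w"
      by (rule bcontfun_eqI) (simp add: Rapp linear_scale[OF bounded_linear.linear[OF f(1)]])
    fix w show "norm (R w) \<le> norm w * 1" using Rn by simp
  qed
  moreover have "onorm R \<le> 1" by (rule onorm_bound) (use Rn in auto)
  moreover have "\<forall>k<n. apply_bcontfun (R (T (x k))) k = norm (T (x k))" by (simp add: Rapp f(3))
  ultimately show ?thesis by blast
qed

lemma final: "pi_X NX r n T = Sup RHSset"
proof (rule antisym)
  show "pi_X NX r n T \<le> Sup RHSset"
    unfolding LHS_eq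
  proof (rule cSup_least[OF Lset_ne])
    fix v assume "v \<in> Lset"
    then obtain x where x: "omega r n x \<le> 1" "v = NX (\<lambda>k. if k < n then norm (T (x k)) else 0)"
      unfolding Lset_def by blast
    obtain R :: "'f \<Rightarrow> (nat \<Rightarrow>\<^sub>C real)" where R: "bounded_linear R" "onorm R \<le> 1"
      "\<forall>k<n. apply_bcontfun (R (T (x k))) k = norm (T (x k))" using R_construct[of x] by blast
    have "NX (\<lambda>k. if k < n then norm (T (x k)) else 0) \<le> Sup RHSset"
    proof (rule NX_least)
      fix \<tau> assume t: "\<tau> \<in> Y" "NY \<tau> \<le> 1"
      have tl: "\<tau> \<in> linf_set" using t(1) mss_linf[OF M1] by blast
      have "LqS q {..<n} (\<lambda>k. norm (T (x k)) * \<tau> k) \<le> LqS q {..<n} (\<lambda>k. norm (diag_op \<tau> (R (T (x k)))))"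
      proof (rule LqS_mono[OF q1])
        fix k assume "k \<in> {..<n}"
        hence "\<bar>norm (T (x k)) * \<tau> k\<bar> = \<bar>\<tau> k * apply_bcontfun (R (T (x k))) k\<bar>" using R(3) by (simp add: mult.commute)
        also have "\<dots> \<le> norm (diag_op \<tau> (R (T (x k))))" by (rule diag_coord[OF tl])
        finally show "\<bar>norm (T (x k)) * \<tau> k\<bar> \<le> \<bar>norm (diag_op \<tau> (R (T (x k))))\<bar>" by simp
      qed simp
      also have "\<dots> \<le> pi_pq q r n (diag_op \<tau> \<circ> R \<circ> T)" by (rule inner_upper[OF R(1,2) t x(1)])
      also have "\<dots> \<le> Sup RHSset"
        by (rule cSup_upper[OF _ RHS_bdd]) (use R t in \<open>auto simp: RHSset_def\<close>)
      finally show "LqS q {..<n} (\<lambda>k. norm (T (x k)) * \<tau> k) \<le> Sup RHSset" .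
    qed
    thus "v \<le> Sup RHSset" using x(2) by simp
  qed
  show "Sup RHSset \<le> pi_X NX r n T"
    by (rule cSup_least[OF RHS_ne]) (use rhs_le in \<open>auto simp: RHSset_def\<close>)
qed

end


theorem proposition2p1:
  fixes q r :: ereal
    and Y X :: "(nat \<Rightarrow> real) set"
    and NY NX :: "(nat \<Rightarrow> real) \<Rightarrow> real"
    and T :: "'e::banach \<Rightarrow> 'f::banach"
    and n :: nat
  assumes "1 \<le> r" and "r \<le> q"
    and "maximal_symmetric_seq_space Y NY"
    and "X = IDL_set Y NY (lq_set q) (lq_norm q)"
    and "\<forall>\<sigma>\<in>X. NX \<sigma> = IDL_norm Y NY (lq_norm q) \<sigma>"
    and "bounded_linear T"
  shows "pi_X NX r n T =
    Sup {pi_pq q r n (diag_op \<sigma> \<circ> R \<circ> T) | R \<sigma>.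
           bounded_linear (R :: 'f \<Rightarrow> (nat \<Rightarrow>\<^sub>C real)) \<and> onorm R \<le> 1 \<and> \<sigma> \<in> Y \<and> NY \<sigma> \<le> 1}"
proof -
  interpret setting q r Y X NY NX T n using assms unfolding setting_def by blast
  show ?thesis using final unfolding RHSset_def .
qed

end
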